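(* Let $2\le r_1<r_2$ be integers and $n$ such that $h_0:=n-5-2(r_1+r_2)\ge2$. Let $T^*=[h_0,2,2]$ and $T_*=[2,2,h_0]$, both in $\mathfrak{F}(n)$, and let $\alpha([h,q_1,q_2])=[h-1,q_1+1,q_2]$ and $\gamma([h,q_1,q_2])=[h-1,q_1,q_2+1]$ (defined for $h\ge3$). Then: (a) the ordered sequence $\mathcal{A}=\{T^*,\alpha(T^* ),\dots,\alpha^{h_0-2}(T^* ),\gamma(T^* ),\alpha(\gamma(T^* )),\dots,\alpha^{h_0-3}(\gamma(T^* )),\dots,\gamma^{h_0-2}(T^* )=T_*\}$, i.e. the trees $\alpha^k(\gamma^j(T^* ))$ for $0\le j\le h_0-2$, $0\le k\le h_0-2-j$, listed in lexicographic order of $(j,k)$, consists of exactly the elements of $\mathfrak{F}(n)$; (b) the sequence $\mathcal{A}$ is ordered decreasingly with respect to the inverse lexicographic order $\succ$, defined by $[x,y,z]\succ[x',y',z']$ if and only if $z'>z$, or $z'=z$ and $y'>y$; (c) for $[x,y,z],[x',y',z']\in\mathfrak{F}(n)$, if $[x,y,z]\succ[x',y',z']$ then $\rho([x,y,z])>\rho([x',y',z'])$; (d) the maximum (resp. minimum) spectral radius over $\mathfrak{F}(n)$ is $\rho(T^* )$ (resp. $\rho(T_* )$).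
   Context: $\rho(G)$ denotes the spectral radius (largest eigenvalue of the adjacency matrix) of a graph $G$. For integers $h,q_1,q_2\ge 2$ and fixed integers $2\le r_1<r_2$, the tree $[h,q_1,q_2]$ is constructed as follows: take a vertex $u$; attach to $u$ a pendant path with $h$ edges; attach to $u$ a path with $q_1$ edges ending at a vertex $v_1$, and attach to $v_1$ exactly $r_1$ pendant paths with $2$ edges each; attach to $u$ a path with $q_2$ edges ending at a vertex $v_2$, and attach to $v_2$ exactly $r_2$ pendant paths with $2$ edges each. It has $n=1+h+q_1+q_2+2(r_1+r_2)$ vertices. $\mathfrak{F}(n)$ is the set of all such trees $[h,q_1,q_2]$ with $h,q_1,q_2\ge2$ and $h+q_1+q_2=n-1-2(r_1+r_2)$. *)

theory Defs
  imports Main "Jordan_Normal_Form.Spectral_Radius"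
begin

definition path_edges :: "nat \<Rightarrow> nat \<Rightarrow> nat \<Rightarrow> (nat \<times> nat) set" where
  "path_edges a s k = (if 0 < k then {(a, s)} else {}) \<union> {(s + i, s + i + 1) | i. i + 1 < k}"

definition tree_order :: "nat \<Rightarrow> nat \<Rightarrow> nat \<times> nat \<times> nat \<Rightarrow> nat" where
  "tree_order r1 r2 t = (case t of (h, q1, q2) \<Rightarrow> 1 + h + q1 + q2 + 2 * (r1 + r2))"

text \<open>Edge set of the tree [h,q1,q2] on vertices 0..n-1: u = 0, pendant path on 1..h,
  path to v1 = h+q1 on h+1..h+q1, path to v2 = h+q1+q2 on h+q1+1..h+q1+q2,
  then r1 pendant paths of length 2 at v1 and r2 pendant paths of length 2 at v2.\<close>
definition tree_edges :: "nat \<Rightarrow> nat \<Rightarrow> nat \<times> nat \<times> nat \<Rightarrow> (nat \<times> nat) set" where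
  "tree_edges r1 r2 t = (case t of (h, q1, q2) \<Rightarrow>
     let v1 = h + q1; v2 = h + q1 + q2; b = h + q1 + q2 + 1 in
       path_edges 0 1 h \<union> path_edges 0 (h + 1) q1 \<union> path_edges 0 (h + q1 + 1) q2
       \<union> (\<Union>i<r1. path_edges v1 (b + 2 * i) 2)
       \<union> (\<Union>i<r2. path_edges v2 (b + 2 * r1 + 2 * i) 2))"

definition tree_adj :: "nat \<Rightarrow> nat \<Rightarrow> nat \<times> nat \<times> nat \<Rightarrow> complex mat" where
  "tree_adj r1 r2 t = mat (tree_order r1 r2 t) (tree_order r1 r2 t)
     (\<lambda>(i, j). if (i, j) \<in> tree_edges r1 r2 t \<or> (j, i) \<in> tree_edges r1 r2 t then 1 else 0)"

definition rho :: "nat \<Rightarrow> nat \<Rightarrow> nat \<times> nat \<times> nat \<Rightarrow> real" where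
  "rho r1 r2 t = spectral_radius (tree_adj r1 r2 t)"

definition family :: "nat \<Rightarrow> nat \<Rightarrow> nat \<Rightarrow> (nat \<times> nat \<times> nat) set" where
  "family r1 r2 n = {(h, q1, q2). 2 \<le> h \<and> 2 \<le> q1 \<and> 2 \<le> q2 \<and>
      int h + int q1 + int q2 = int n - 1 - 2 * (int r1 + int r2)}"

definition alpha :: "nat \<times> nat \<times> nat \<Rightarrow> nat \<times> nat \<times> nat" where
  "alpha t = (case t of (h, q1, q2) \<Rightarrow> (h - 1, q1 + 1, q2))"

definition gamma :: "nat \<times> nat \<times> nat \<Rightarrow> nat \<times> nat \<times> nat" where
  "gamma t = (case t of (h, q1, q2) \<Rightarrow> (h - 1, q1, q2 + 1))"

definition inv_lex_succ :: "nat \<times> nat \<times> nat \<Rightarrow> nat \<times> nat \<times> nat \<Rightarrow> bool" where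
  "inv_lex_succ t t' = (case t of (x, y, z) \<Rightarrow> case t' of (x', y', z') \<Rightarrow>
      z' > z \<or> (z' = z \<and> y' > y))"

definition seqA :: "nat \<Rightarrow> (nat \<times> nat \<times> nat) list" where
  "seqA h0 = concat (map (\<lambda>j. map (\<lambda>k. (alpha ^^ k) ((gamma ^^ j) (h0, 2, 2))) [0..<h0 - 1 - j])
                          [0..<h0 - 1])"

end

theory Submission
  imports Defs
begin

function xv :: "(nat \<Rightarrow> nat) \<Rightarrow> (nat \<Rightarrow> nat) \<Rightarrow> nat \<Rightarrow> (nat \<Rightarrow> real) \<Rightarrow> nat \<Rightarrow> real" where
  "xv p dep r d c = (if c = r \<or> \<not> dep (p c) < dep c then 1 else xv p dep r d (p c) / d c)"
  by pat_completeness auto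
termination by (relation "measure (\<lambda>(p,dep,r,d,c). dep c)") auto

declare xv.simps[simp del]

locale ptree =
  fixes N r :: nat and p dep :: "nat \<Rightarrow> nat"
  assumes r_lt: "r < N"
    and p_lt: "\<And>c. c < N \<Longrightarrow> c \<noteq> r \<Longrightarrow> p c < N"
    and dep_lt: "\<And>c. c < N \<Longrightarrow> c \<noteq> r \<Longrightarrow> dep (p c) < dep c"
begin

definition ch :: "nat \<Rightarrow> nat set" where "ch i = {c. c < N \<and> c \<noteq> r \<and> p c = i}"
definition adj :: "nat \<Rightarrow> nat \<Rightarrow> bool" where "adj i j \<longleftrightarrow> (i \<noteq> r \<and> j = p i) \<or> (j \<noteq> r \<and> i = p j)"
definition M :: "complex mat" where "M = mat N N (\<lambda>(i,j). if adj i j then 1 else 0)"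
definition Deq :: "(real \<Rightarrow> nat \<Rightarrow> real) \<Rightarrow> bool" where
  "Deq D \<longleftrightarrow> (\<forall>l i. i < N \<longrightarrow> D l i = l - (\<Sum>c\<in>ch i. 1 / D l c))"

lemma ch_fin: "finite (ch i)" unfolding ch_def by auto
lemma ch_sub: "ch i \<subseteq> {..<N}" unfolding ch_def by auto
lemma ch_card: "card (ch i) \<le> N" using card_mono[OF _ ch_sub] by auto
lemma ch_D: "c \<in> ch i \<Longrightarrow> c < N \<and> c \<noteq> r \<and> p c = i" unfolding ch_def by auto

lemma child_induct[consumes 1, case_names step]:
  assumes "i < N" and step: "\<And>i. i < N \<Longrightarrow> (\<And>c. c \<in> ch i \<Longrightarrow> P c) \<Longrightarrow> P i"
  shows "P i"
proof -
  define K where "K = Max (dep ` {..<N})"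
  have dK: "c < N \<Longrightarrow> dep c \<le> K" for c unfolding K_def by (intro Max_ge) auto
  have "\<forall>i. K - dep i = m \<longrightarrow> i < N \<longrightarrow> P i" for m
  proof (induction m rule: less_induct)
    case (less m)
    show ?case
    proof (intro allI impI)
      fix i assume hm: "K - dep i = m" and hi: "i < N"
      show "P i"
      proof (rule step[OF hi])
        fix c assume c: "c \<in> ch i"
        hence cN: "c < N" and cr: "c \<noteq> r" and pc: "p c = i" unfolding ch_def by auto
        have "dep i < dep c" using dep_lt[OF cN cr] pc by simp
        moreover have "dep c \<le> K" using dK[OF cN] .
        ultimately have "K - dep c < m" using hm by simp
        thus "P c" using less cN by blast
      qed
    qed
  qed
  thus ?thesis using assms(1) by blast
qed

lemma parent_induct[consumes 1, case_names root step]: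
  assumes "c < N" and root: "P r" and step: "\<And>c. c < N \<Longrightarrow> c \<noteq> r \<Longrightarrow> P (p c) \<Longrightarrow> P c"
  shows "P c"
proof -
  have "\<forall>c. dep c = m \<longrightarrow> c < N \<longrightarrow> P c" for m
  proof (induction m rule: less_induct)
    case (less m)
    show ?case
    proof (intro allI impI)
      fix c assume cm: "dep c = m" and cN: "c < N"
      show "P c"
      proof (cases "c = r")
        case True thus ?thesis using root by simp
      next
        case False
        have "P (p c)" using less dep_lt[OF cN False] p_lt[OF cN False] cm by blast
        thus ?thesis using step cN False by blast
      qed
    qed
  qed
  thus ?thesis using assms(1) by blast
qed

lemma adj_sym: "adj i j = adj j i" unfolding adj_def by auto

lemma p_notin_ch: assumes "i < N" "i \<noteq> r" shows "p i \<notin> ch i"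
proof
  assume "p i \<in> ch i"
  hence a: "p (p i) = i" "p i < N" "p i \<noteq> r" unfolding ch_def by auto
  have "dep (p i) < dep i" using dep_lt assms by auto
  moreover have "dep (p (p i)) < dep (p i)" using dep_lt[OF a(2) a(3)] .
  ultimately show False using a(1) by simp
qed

lemma row_sum:
  fixes w :: "nat \<Rightarrow> 'a::comm_ring_1"
  assumes i: "i < N"
  shows "(\<Sum>j<N. (if adj i j then 1 else 0) * w j) = (if i = r then 0 else w (p i)) + (\<Sum>c\<in>ch i. w c)"
proof -
  have "(\<Sum>j<N. (if adj i j then 1 else 0) * w j) = (\<Sum>j\<in>{..<N}. if j \<in> {j. adj i j} then w j else 0)"
    by (intro sum.cong) auto
  also have "\<dots> = sum w ({..<N} \<inter> {j. adj i j})" by (simp add: sum.inter_restrict)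
  also have "{..<N} \<inter> {j. adj i j} = (if i = r then {} else {p i}) \<union> ch i"
    using i p_lt unfolding adj_def ch_def by auto
  also have "sum w \<dots> = (if i = r then 0 else w (p i)) + (\<Sum>c\<in>ch i. w c)"
  proof (cases "i = r")
    case True thus ?thesis by simp
  next
    case False
    thus ?thesis using p_notin_ch[OF i False] ch_fin by simp
  qed
  finally show ?thesis .
qed

lemma M_carrier: "M \<in> carrier_mat N N" unfolding M_def by simp

lemma M_mult_raw: assumes v: "v \<in> carrier_vec N" and i: "i < N"
  shows "(M *\<^sub>v v) $ i = (\<Sum>j<N. (if adj i j then 1 else 0) * v $ j)"
  using v i unfolding M_def by (auto simp: scalar_prod_def row_def lessThan_atLeast0 intro!: sum.cong)

lemma M_mult: assumes v: "v \<in> carrier_vec N" and i: "i < N"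
  shows "(M *\<^sub>v v) $ i = (if i = r then 0 else v $ (p i)) + (\<Sum>c\<in>ch i. v $ c)"
  unfolding M_mult_raw[OF v i] by (rule row_sum[OF i])

lemma eig_real:
  assumes ev: "M *\<^sub>v v = \<nu> \<cdot>\<^sub>v v" and v: "v \<in> carrier_vec N" and nz: "v \<noteq> 0\<^sub>v N"
  shows "Im \<nu> = 0"
proof -
  define w where "w j = v $ j" for j
  define a :: "nat \<Rightarrow> nat \<Rightarrow> complex" where "a i j = (if adj i j then 1 else 0)" for i j
  have evi: "(\<Sum>j<N. a i j * w j) = \<nu> * w i" if i: "i < N" for i
  proof -
    have "(M *\<^sub>v v) $ i = (\<nu> \<cdot>\<^sub>v v) $ i" using ev by simp
    thus ?thesis using M_mult_raw[OF v i] v i unfolding a_def w_def by simp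
  qed
  define Q where "Q = (\<Sum>i<N. cnj (w i) * (\<Sum>j<N. a i j * w j))"
  have "Q = (\<Sum>i<N. cnj (w i) * (\<nu> * w i))"
    unfolding Q_def by (intro sum.cong) (simp_all add: evi)
  hence Q1: "Q = \<nu> * (\<Sum>i<N. cnj (w i) * w i)"
    by (simp add: sum_distrib_left mult_ac)
  have acnj: "cnj (a i j) = a i j" for i j unfolding a_def by simp
  have "cnj Q = (\<Sum>i<N. w i * (\<Sum>j<N. a i j * cnj (w j)))"
    unfolding Q_def by (simp add: acnj)
  also have "\<dots> = (\<Sum>i<N. \<Sum>j<N. a i j * w i * cnj (w j))"
    by (simp add: sum_distrib_left mult_ac)
  also have "\<dots> = (\<Sum>j<N. \<Sum>i<N. a i j * w i * cnj (w j))" by (rule sum.swap)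
  also have "\<dots> = Q" unfolding Q_def
    by (simp add: sum_distrib_left mult_ac a_def adj_sym)
  finally have cQ: "cnj Q = Q" .
  have ImQ: "Im Q = 0" using arg_cong[OF cQ, of Im] by simp
  define S where "S = (\<Sum>i<N. (cmod (w i))^2)"
  have SS: "(\<Sum>i<N. cnj (w i) * w i) = of_real S"
  proof -
    have z: "cnj z * z = of_real ((cmod z)^2)" for z
      by (simp only: complex_norm_square mult.commute)
    show ?thesis unfolding S_def of_real_sum by (intro sum.cong) (simp_all only: z)
  qed
  obtain k where k: "k < N" "w k \<noteq> 0"
  proof -
    have "\<exists>k<N. v $ k \<noteq> 0" using nz v by (metis eq_vecI carrier_vecD index_zero_vec)
    thus ?thesis using that unfolding w_def by blast
  qed
  have "S \<ge> (cmod (w k))^2" unfolding S_def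
    by (rule member_le_sum) (use k in auto)
  moreover have "(cmod (w k))^2 > 0" using k by simp
  ultimately have Spos: "S > 0" by linarith
  have "Im (\<nu> * of_real S) = 0" using Q1 SS ImQ by simp
  thus ?thesis using Spos by simp
qed

lemma N_pos: "0 < N" using r_lt by simp

lemma sum_ch_scale:
  fixes g :: "nat \<Rightarrow> real"
  shows "(\<Sum>c\<in>ch i. x / g c) = x * (\<Sum>c\<in>ch i. 1 / g c)"
  by (simp add: sum_distrib_left)

lemma eig_root:
  assumes D: "Deq D" and ev: "M *\<^sub>v v = of_real \<mu> \<cdot>\<^sub>v v" and v: "v \<in> carrier_vec N"
    and vnz: "v \<noteq> 0\<^sub>v N"
    and nz: "\<And>i. i < N \<Longrightarrow> i \<noteq> r \<Longrightarrow> D \<mu> i \<noteq> 0"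
  shows "D \<mu> r = 0"
proof (rule ccontr)
  assume Dr: "D \<mu> r \<noteq> 0"
  define w where "w j = v $ j" for j
  have eq: "(if i = r then 0 else w (p i)) + (\<Sum>c\<in>ch i. w c) = of_real \<mu> * w i" if i: "i < N" for i
  proof -
    have "(M *\<^sub>v v) $ i = (of_real \<mu> \<cdot>\<^sub>v v) $ i" using ev by simp
    thus ?thesis using M_mult[OF v i] v i unfolding w_def by simp
  qed
  have Dsum: "D \<mu> i = \<mu> - (\<Sum>c\<in>ch i. 1 / D \<mu> c)" if "i < N" for i using D that unfolding Deq_def by blast
  have key: "c \<noteq> r \<longrightarrow> w (p c) = of_real (D \<mu> c) * w c" if c: "c < N" for c
    using c
  proof (induction rule: child_induct)
    case (step i)
    have chv: "w k = w i / of_real (D \<mu> k)" if k: "k \<in> ch i" for k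
    proof -
      have k': "k < N" "k \<noteq> r" "p k = i" using ch_D[OF k] by auto
      have "w i = of_real (D \<mu> k) * w k" using step.IH[OF k] k' by simp
      thus ?thesis using nz[OF k'(1) k'(2)] by (simp add: field_simps)
    qed
    have "(\<Sum>c\<in>ch i. w c) = (\<Sum>c\<in>ch i. w i / of_real (D \<mu> c))" by (intro sum.cong) (simp_all add: chv)
    also have "\<dots> = w i * of_real (\<Sum>c\<in>ch i. 1 / D \<mu> c)"
      by (simp add: sum_distrib_left of_real_sum divide_inverse)
    finally have s: "(\<Sum>c\<in>ch i. w c) = w i * of_real (\<Sum>c\<in>ch i. 1 / D \<mu> c)" .
    show ?case
    proof
      assume ir: "i \<noteq> r"
      define S where "S = (\<Sum>c\<in>ch i. 1 / D \<mu> c)"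
      have "w (p i) = of_real \<mu> * w i - w i * of_real S"
        using eq[OF step.hyps] ir s unfolding S_def by (simp add: algebra_simps)
      also have "\<dots> = w i * of_real (\<mu> - S)" by (simp only: of_real_diff right_diff_distrib mult.commute)
      also have "\<mu> - S = D \<mu> i" using Dsum[OF step.hyps] unfolding S_def by simp
      finally show "w (p i) = of_real (D \<mu> i) * w i" by (simp add: mult.commute)
    qed
  qed
  have chr: "w k = w r / of_real (D \<mu> k)" if k: "k \<in> ch r" for k
  proof -
    have k': "k < N" "k \<noteq> r" "p k = r" using ch_D[OF k] by auto
    have "w r = of_real (D \<mu> k) * w k" using key[OF k'(1)] k' by simp
    thus ?thesis using nz[OF k'(1) k'(2)] by (simp add: field_simps)
  qed
  have "(\<Sum>c\<in>ch r. w c) = (\<Sum>c\<in>ch r. w r / of_real (D \<mu> c))" by (intro sum.cong) (simp_all add: chr)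
  also have "\<dots> = w r * of_real (\<Sum>c\<in>ch r. 1 / D \<mu> c)"
    by (simp add: sum_distrib_left of_real_sum divide_inverse)
  finally have e1: "w r * of_real (\<Sum>c\<in>ch r. 1 / D \<mu> c) = of_real \<mu> * w r" using eq[OF r_lt] by simp
  define S where "S = (\<Sum>c\<in>ch r. 1 / D \<mu> c)"
  have e2: "w r * of_real S = of_real \<mu> * w r" using e1 unfolding S_def .
  have "w r * of_real (D \<mu> r) = w r * of_real (\<mu> - S)" using Dsum[OF r_lt] unfolding S_def by simp
  also have "\<dots> = of_real \<mu> * w r - w r * of_real S" by (simp only: of_real_diff right_diff_distrib mult.commute)
  also have "\<dots> = 0" unfolding e2 by simp
  finally have "w r * of_real (D \<mu> r) = 0" .
  hence wr: "w r = 0" using Dr by simp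
  have "w c = 0" if c: "c < N" for c
    using c
  proof (induction rule: parent_induct)
    case root thus ?case using wr .
  next
    case (step c)
    have "w (p c) = of_real (D \<mu> c) * w c" using key[OF step.hyps(1)] step.hyps by simp
    thus ?case using step nz[OF step.hyps(1) step.hyps(2)] by simp
  qed
  hence "v = 0\<^sub>v N" using v unfolding w_def by (intro eq_vecI) auto
  thus False using vnz by simp
qed

lemma eig_from_zero:
  assumes D: "Deq D" and Dr: "D \<mu> r = 0" and nz: "\<And>i. i < N \<Longrightarrow> i \<noteq> r \<Longrightarrow> D \<mu> i \<noteq> 0"
  shows "eigenvalue M (of_real \<mu>)"
proof -
  define x where "x = xv p dep r (D \<mu>)"
  have xp: "x c = x (p c) / D \<mu> c" if "c < N" "c \<noteq> r" for c
    unfolding x_def using dep_lt[OF that] that by (subst xv.simps) simp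
  have xr: "x r = 1" unfolding x_def by (subst xv.simps) simp
  have Dsum: "D \<mu> i = \<mu> - (\<Sum>c\<in>ch i. 1 / D \<mu> c)" if "i < N" for i using D that unfolding Deq_def by blast
  have chx: "(\<Sum>c\<in>ch i. x c) = x i * (\<Sum>c\<in>ch i. 1 / D \<mu> c)" for i
  proof -
    have "(\<Sum>c\<in>ch i. x c) = (\<Sum>c\<in>ch i. x i / D \<mu> c)"
      by (intro sum.cong refl) (use ch_D xp in auto)
    thus ?thesis by (simp add: sum_distrib_left)
  qed
  have eqr: "(if i = r then 0 else x (p i)) + (\<Sum>c\<in>ch i. x c) = \<mu> * x i" if i: "i < N" for i
  proof (cases "i = r")
    case True
    thus ?thesis using chx[of r] Dsum[OF r_lt] Dr by (simp add: algebra_simps)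
  next
    case False
    have "x (p i) = D \<mu> i * x i" using xp[OF i False] nz[OF i False] by (simp add: field_simps)
    thus ?thesis using False chx[of i] Dsum[OF i] by (simp add: algebra_simps)
  qed
  define V where "V = vec N (\<lambda>i. complex_of_real (x i))"
  have V: "V \<in> carrier_vec N" unfolding V_def by simp
  have "M *\<^sub>v V = of_real \<mu> \<cdot>\<^sub>v V"
  proof (rule eq_vecI)
    fix i assume "i < dim_vec (of_real \<mu> \<cdot>\<^sub>v V)"
    hence i: "i < N" unfolding V_def by simp
    have pN: "i \<noteq> r \<Longrightarrow> p i < N" using p_lt i by simp
    have "(M *\<^sub>v V) $ i = of_real ((if i = r then 0 else x (p i)) + (\<Sum>c\<in>ch i. x c))"
      unfolding M_mult[OF V i] using pN ch_D by (auto simp: V_def of_real_sum intro!: sum.cong)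
    also have "\<dots> = of_real (\<mu> * x i)" using eqr[OF i] by simp
    finally show "(M *\<^sub>v V) $ i = (of_real \<mu> \<cdot>\<^sub>v V) $ i" using i by (simp add: V_def)
  qed (use M_carrier V in auto)
  moreover have "V \<noteq> 0\<^sub>v N"
  proof
    assume "V = 0\<^sub>v N"
    hence "V $ r = 0" using r_lt by simp
    thus False using xr r_lt unfolding V_def by simp
  qed
  ultimately have "eigenvector M V (of_real \<mu>)" unfolding eigenvector_def using M_carrier V by auto
  thus ?thesis unfolding eigenvalue_def by blast
qed

lemma eig_le_sr: assumes "eigenvalue M (of_real \<mu>)" shows "\<bar>\<mu>\<bar> \<le> spectral_radius M"
proof -
  have "norm (complex_of_real \<mu>) \<in> norm ` spectrum M" using assms unfolding spectrum_def by (intro imageI) auto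
  from spectral_radius_mem_max(2)[OF M_carrier N_pos this] show ?thesis by simp
qed

lemma D_mono:
  assumes D: "Deq D" and l: "l0 \<le> l" and pos: "\<And>i. i < N \<Longrightarrow> D l0 i > 0" and i: "i < N"
  shows "D l0 i \<le> D l i"
  using i
proof (induction rule: child_induct)
  case (step i)
  have "(\<Sum>c\<in>ch i. 1 / D l c) \<le> (\<Sum>c\<in>ch i. 1 / D l0 c)"
  proof (rule sum_mono)
    fix c assume c: "c \<in> ch i"
    have "0 < D l0 c" "D l0 c \<le> D l c" using pos step.IH[OF c] ch_D[OF c] by auto
    thus "1 / D l c \<le> 1 / D l0 c" by (intro divide_left_mono) auto
  qed
  thus ?case using D step.hyps l unfolding Deq_def by (metis diff_mono)
qed

lemma D_odd:
  assumes D: "Deq D" and i: "i < N"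
  shows "D (-l) i = - D l i"
  using i
proof (induction rule: child_induct)
  case (step i)
  have "D (-l) i = -l - (\<Sum>c\<in>ch i. 1 / D (-l) c)" using D step.hyps unfolding Deq_def by blast
  also have "\<dots> = -l + (\<Sum>c\<in>ch i. 1 / D l c)"
    using step.IH ch_D by (simp add: sum_negf)
  also have "\<dots> = - D l i" using D step.hyps unfolding Deq_def by (metis minus_diff_eq uminus_add_conv_diff)
  finally show ?case .
qed

lemma UB:
  assumes D: "Deq D" and mu: "0 < \<mu>" and pos: "\<And>i. i < N \<Longrightarrow> D \<mu> i > 0"
  shows "spectral_radius M < \<mu>"
proof (rule ccontr)
  assume "\<not> spectral_radius M < \<mu>"
  hence ge: "\<mu> \<le> spectral_radius M" by simp
  obtain \<nu> where nu: "\<nu> \<in> spectrum M" "norm \<nu> = spectral_radius M"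
    using spectral_radius_mem_max(1)[OF M_carrier N_pos] by auto
  obtain v where v: "eigenvector M v \<nu>" using nu(1) unfolding spectrum_def eigenvalue_def by auto
  have vc: "v \<in> carrier_vec N" "v \<noteq> 0\<^sub>v N" "M *\<^sub>v v = \<nu> \<cdot>\<^sub>v v"
    using v M_carrier unfolding eigenvector_def by auto
  have "Im \<nu> = 0" using eig_real[OF vc(3) vc(1) vc(2)] .
  then obtain x where x: "\<nu> = of_real x" by (intro that[of "Re \<nu>"]) (simp add: complex_eq_iff)
  have ax: "\<mu> \<le> \<bar>x\<bar>" using ge nu(2) x by simp
  have ev': "M *\<^sub>v v = of_real x \<cdot>\<^sub>v v" using vc(3) x by simp
  show False
  proof (cases "\<mu> \<le> x")
    case True
    have P: "D x i > 0" if "i < N" for i using D_mono[OF D True pos that] pos[OF that] by simp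
    have "D x r = 0"
    proof (rule eig_root[OF D ev' vc(1) vc(2)])
      fix i assume "i < N" thus "D x i \<noteq> 0" using P[of i] by simp
    qed
    thus False using P[OF r_lt] by simp
  next
    case False
    hence mx: "\<mu> \<le> -x" using ax by linarith
    have P: "D (-x) i > 0" if "i < N" for i using D_mono[OF D mx pos that] pos[OF that] by simp
    have Dx: "D x i = - D (-x) i" if "i < N" for i using D_odd[OF D that, of "-x"] by simp
    have "D x r = 0"
    proof (rule eig_root[OF D ev' vc(1) vc(2)])
      fix i assume "i < N" thus "D x i \<noteq> 0" using P[of i] Dx[of i] by simp
    qed
    thus False using P[OF r_lt] Dx[OF r_lt] by simp
  qed
qed

lemma large:
  assumes D: "Deq D" and l: "real N + 1 \<le> l" and i: "i < N"
  shows "1 \<le> D l i"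
  using i
proof (induction rule: child_induct)
  case (step i)
  have "(\<Sum>c\<in>ch i. 1 / D l c) \<le> (\<Sum>c\<in>ch i. 1)"
  proof (intro sum_mono)
    fix c assume "c \<in> ch i"
    hence "1 \<le> D l c" by (rule step.IH)
    thus "1 / D l c \<le> 1" by simp
  qed
  also have "\<dots> = real (card (ch i))" by simp
  also have "\<dots> \<le> real N" using ch_card by simp
  finally have "(\<Sum>c\<in>ch i. 1 / D l c) \<le> real N" .
  moreover have "D l i = l - (\<Sum>c\<in>ch i. 1 / D l c)" using D step.hyps unfolding Deq_def by blast
  ultimately show ?case using l by linarith
qed

lemma D_cont:
  assumes D: "Deq D" and nz: "\<And>l i. l \<in> {a..b} \<Longrightarrow> i < N \<Longrightarrow> i \<noteq> r \<Longrightarrow> D l i \<noteq> 0"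
    and i: "i < N"
  shows "continuous_on {a..b} (\<lambda>l. D l i)"
  using i
proof (induction rule: child_induct)
  case (step i)
  have c1: "continuous_on {a..b} (\<lambda>l. l - (\<Sum>c\<in>ch i. 1 / D l c))"
  proof (intro continuous_on_diff continuous_on_id continuous_on_sum continuous_on_divide continuous_on_const)
    fix c assume c: "c \<in> ch i"
    show "continuous_on {a..b} (\<lambda>l. D l c)" by (rule step.IH[OF c])
    show "\<forall>l\<in>{a..b}. D l c \<noteq> 0" using nz ch_D[OF c] by blast
  qed
  have e: "l - (\<Sum>c\<in>ch i. 1 / D l c) = D l i" for l
    using D step.hyps unfolding Deq_def by simp
  have eqf: "(\<lambda>l. D l i) = (\<lambda>l. l - (\<Sum>c\<in>ch i. 1 / D l c))" using e by (intro ext) simp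
  show ?case by (subst eqf) (rule c1)
qed

lemma zero_exists:
  assumes D: "Deq D" and pos: "\<And>l i. a \<le> l \<Longrightarrow> i < N \<Longrightarrow> i \<noteq> r \<Longrightarrow> D l i > 0"
    and start: "D a r \<le> 0"
  shows "\<exists>l\<ge>a. D l r = 0"
proof -
  define b where "b = max a (real N + 1)"
  have "1 \<le> D b r" using large[OF D _ r_lt] unfolding b_def by simp
  moreover have "continuous_on {a..b} (\<lambda>l. D l r)"
    by (rule D_cont[OF D _ r_lt]) (use pos in force)
  ultimately obtain l where "a \<le> l" "l \<le> b" "D l r = 0"
    using IVT'[of "\<lambda>l. D l r" a 0 b] start unfolding b_def by force
  thus ?thesis by blast
qed

end

lemma compare:
  assumes P1: "ptree N r p dep" and P2: "ptree N' r' p' dep'"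
  and D1: "ptree.Deq N r p D" and D2: "ptree.Deq N' r' p' D'"
  and a: "0 < a"
  and pos1: "\<And>l i. a \<le> l \<Longrightarrow> i < N \<Longrightarrow> i \<noteq> r \<Longrightarrow> D l i > 0"
  and pos2: "\<And>l i. a \<le> l \<Longrightarrow> i < N' \<Longrightarrow> i \<noteq> r' \<Longrightarrow> D' l i > 0"
  and cmp: "\<And>l. a \<le> l \<Longrightarrow> D l r = 0 \<Longrightarrow> D' l r' > 0"
  and start: "D a r \<le> 0"
  shows "spectral_radius (ptree.M N' r' p') < spectral_radius (ptree.M N r p)"
proof -
  interpret T1: ptree N r p dep by (rule P1)
  interpret T2: ptree N' r' p' dep' by (rule P2)
  obtain l where l: "a \<le> l" "D l r = 0" using T1.zero_exists[OF D1 pos1 start] by blast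
  have "eigenvalue T1.M (of_real l)"
    by (rule T1.eig_from_zero[OF D1 l(2)]) (use pos1 l in force)
  hence "\<bar>l\<bar> \<le> spectral_radius T1.M" by (rule T1.eig_le_sr)
  moreover have "spectral_radius T2.M < l"
  proof (rule T2.UB[OF D2])
    show "0 < l" using a l by simp
    fix i assume "i < N'"
    thus "0 < D' l i" using pos2[OF l(1)] cmp[OF l] by (cases "i = r'") auto
  qed
  ultimately show ?thesis by simp
qed

locale ctree =
  fixes r1 r2 h q1 q2 :: nat
  assumes h1: "1 \<le> h" and q11: "1 \<le> q1" and q22: "2 \<le> q2"
begin

abbreviation "NN \<equiv> 1 + h + q1 + q2 + 2 * (r1 + r2)"
abbreviation "RT \<equiv> h + q1 + q2"
abbreviation "BB \<equiv> h + q1 + q2 + 1"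

definition par :: "nat \<Rightarrow> nat" where
  "par c = (if c = 0 then h + q1 + 1
    else if c \<le> h + q1 then (if c = h + 1 then 0 else c - 1)
    else if c < RT then c + 1
    else if c = RT then 0
    else if (c - BB) mod 2 = 0 then (if c - BB < 2 * r1 then h + q1 else RT) else c - 1)"

definition dep :: "nat \<Rightarrow> nat" where
  "dep c = (if c = 0 then q2
    else if c \<le> h then q2 + c
    else if c \<le> h + q1 then q2 + c - h
    else if c \<le> RT then RT - c
    else if c - BB < 2 * r1 then q2 + q1 + 1 + (c - BB) mod 2
    else 1 + (c - BB) mod 2)"

lemma is_ptree: "ptree NN RT par dep"
proof
  show "RT < NN" by simp
  fix c :: nat assume c: "c < NN" "c \<noteq> RT"
  show "par c < NN" using c h1 q11 q22 unfolding par_def by auto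
  consider "c = 0" | "1 \<le> c" "c \<le> h" | "h < c" "c \<le> h + q1" | "h + q1 < c" "c < RT" | "BB \<le> c"
    using c by linarith
  thus "dep (par c) < dep c"
  proof cases
    case 1
    have "par c = h + q1 + 1" using 1 by (simp add: par_def)
    moreover have "dep (h + q1 + 1) = q2 - 1" using h1 q11 q22 by (simp add: dep_def)
    moreover have "dep c = q2" using 1 by (simp add: dep_def)
    ultimately show ?thesis using q22 by simp
  next
    case 2
    have pc: "par c = c - 1" using 2 by (simp add: par_def)
    have dc: "dep c = q2 + c" using 2 by (simp add: dep_def)
    show ?thesis
    proof (cases "c = 1")
      case True thus ?thesis using pc dc by (simp add: dep_def)
    next
      case False thus ?thesis using pc dc 2 by (simp add: dep_def)
    qed
  next
    case 3
    have dc: "dep c = q2 + c - h" using 3 h1 by (simp add: dep_def)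
    show ?thesis
    proof (cases "c = h + 1")
      case True
      hence "par c = 0" using 3 by (simp add: par_def)
      thus ?thesis using dc True by (simp add: dep_def)
    next
      case False
      hence "par c = c - 1" using 3 by (simp add: par_def)
      moreover have "c - 1 \<noteq> 0" "\<not> c - 1 \<le> h" "c - 1 \<le> h + q1" using 3 False by arith+
      hence "dep (c - 1) = q2 + (c - 1) - h" by (simp add: dep_def)
      ultimately show ?thesis using dc 3 False by simp
    qed
  next
    case 4
    have "par c = c + 1" using 4 by (simp add: par_def)
    moreover have "dep (c + 1) = RT - (c + 1)" using 4 by (simp add: dep_def)
    moreover have "dep c = RT - c" using 4 by (simp add: dep_def)
    ultimately show ?thesis using 4 by simp
  next
    case 5
    define e where "e = c - BB"
    have ce: "c = BB + e" using 5 unfolding e_def by simp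
    show ?thesis
    proof (cases "e mod 2 = 0")
      case True
      show ?thesis
      proof (cases "e < 2 * r1")
        case True
        hence "par c = h + q1" using \<open>e mod 2 = 0\<close> ce by (simp add: par_def)
        moreover have "dep (h + q1) = q2 + q1" using h1 q11 by (simp add: dep_def)
        moreover have "dep c = q2 + q1 + 1" using True \<open>e mod 2 = 0\<close> ce by (simp add: dep_def)
        ultimately show ?thesis by simp
      next
        case False
        hence "par c = RT" using \<open>e mod 2 = 0\<close> ce by (simp add: par_def)
        moreover have "dep RT = 0" using h1 q11 q22 by (simp add: dep_def)
        moreover have "dep c = 1" using False \<open>e mod 2 = 0\<close> ce by (simp add: dep_def)
        ultimately show ?thesis by simp
      qed
    next
      case False
      hence e1: "e mod 2 = 1" by presburger
      hence epos: "1 \<le> e" by (cases e) auto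
      have pc: "par c = c - 1" using e1 ce by (simp add: par_def)
      have cm: "c - 1 = BB + (e - 1)" using ce epos by simp
      have em: "(e - 1) mod 2 = 0" using e1 epos by presburger
      have same: "e - 1 < 2 * r1 \<longleftrightarrow> e < 2 * r1" using e1 epos by presburger
      have "dep (c - 1) = (if e - 1 < 2 * r1 then q2 + q1 + 1 else 1)"
        unfolding cm using em by (simp add: dep_def)
      moreover have "dep c = (if e < 2 * r1 then q2 + q1 + 2 else 2)"
        using ce e1 by (simp add: dep_def)
      ultimately show ?thesis using pc same by simp
    qed
  qed
qed

end

sublocale ctree \<subseteq> ptree NN RT par dep by (rule is_ptree)

context ctree begin

lemma par_eq: assumes "c < NN" "c \<noteq> RT"
  shows "par c = i \<longleftrightarrow> (c = 0 \<and> i = h + q1 + 1) \<or> (1 \<le> c \<and> c \<le> h + q1 \<and> c \<noteq> h + 1 \<and> i = c - 1)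
     \<or> (c = h + 1 \<and> i = 0) \<or> (h + q1 < c \<and> c < RT \<and> i = c + 1)
     \<or> (BB \<le> c \<and> (c - BB) mod 2 = 0 \<and> c - BB < 2 * r1 \<and> i = h + q1)
     \<or> (BB \<le> c \<and> (c - BB) mod 2 = 0 \<and> \<not> c - BB < 2 * r1 \<and> i = RT)
     \<or> (BB \<le> c \<and> (c - BB) mod 2 = 1 \<and> i = c - 1)"
proof -
  consider "c = 0" | "1 \<le> c" "c \<le> h + q1" "c \<noteq> h + 1" | "c = h + 1" | "h + q1 < c" "c < RT"
    | "BB \<le> c" "(c - BB) mod 2 = 0" "c - BB < 2 * r1" | "BB \<le> c" "(c - BB) mod 2 = 0" "\<not> c - BB < 2 * r1"
    | "BB \<le> c" "(c - BB) mod 2 = 1"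
    using assms by linarith
  thus ?thesis
  proof cases
    case 1 thus ?thesis using h1 q11 q22 by (auto simp: par_def)
  next
    case 2 thus ?thesis using h1 q11 q22 by (auto simp: par_def)
  next
    case 3 thus ?thesis using h1 q11 q22 by (auto simp: par_def)
  next
    case 4 thus ?thesis using h1 q11 q22 by (auto simp: par_def)
  next
    case 5 thus ?thesis using h1 q11 q22 by (auto simp: par_def)
  next
    case 6 thus ?thesis using h1 q11 q22 by (auto simp: par_def)
  next
    case 7 thus ?thesis using h1 q11 q22 by (auto simp: par_def)
  qed
qed

lemma ch_iff: "c \<in> ch i \<longleftrightarrow> c < NN \<and> c \<noteq> RT \<and> par c = i"
  unfolding ch_def by simp


end

context ctree begin
lemma ch0: "ch 0 = {1, h + 1}"
proof (intro Set.set_eqI iffI)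
  fix c :: nat assume "c \<in> ch 0"
  hence "c < NN" "c \<noteq> RT" "par c = 0" using ch_iff by blast+
  thus "c \<in> {1, h + 1}" using par_eq[of c 0] h1 q11 q22 by auto
next
  fix c :: nat assume "c \<in> {1, h + 1}"
  thus "c \<in> ch 0" unfolding ch_iff using par_eq[of c 0] h1 q11 q22 by auto
qed

lemma ch_pend: assumes "1 \<le> i" "i < h" shows "ch i = {i + 1}"
proof (intro Set.set_eqI iffI)
  fix c :: nat assume "c \<in> ch i"
  hence "c < NN" "c \<noteq> RT" "par c = i" using ch_iff by blast+
  thus "c \<in> {i + 1}" using par_eq[of c i] assms h1 q11 q22 by auto
next
  fix c :: nat assume "c \<in> {i + 1}"
  thus "c \<in> ch i" unfolding ch_iff using par_eq[of c i] assms h1 q11 q22 by auto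
qed

lemma ch_h: "ch h = {}"
proof (intro Set.set_eqI iffI)
  fix c :: nat assume "c \<in> ch h"
  hence "c < NN" "c \<noteq> RT" "par c = h" using ch_iff by blast+
  thus "c \<in> {}" using par_eq[of c h] h1 q11 q22 by auto
qed simp

lemma ch_b1: assumes "h < i" "i < h + q1" shows "ch i = {i + 1}"
proof (intro Set.set_eqI iffI)
  fix c :: nat assume "c \<in> ch i"
  hence "c < NN" "c \<noteq> RT" "par c = i" using ch_iff by blast+
  thus "c \<in> {i + 1}" using par_eq[of c i] assms h1 q11 q22 by auto
next
  fix c :: nat assume "c \<in> {i + 1}"
  thus "c \<in> ch i" unfolding ch_iff using par_eq[of c i] assms h1 q11 q22 by auto
qed

lemma ch_v1: "ch (h + q1) = (\<lambda>k. BB + 2 * k) ` {..<r1}"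
proof (intro Set.set_eqI iffI)
  fix c :: nat assume "c \<in> ch (h + q1)"
  hence "c < NN" "c \<noteq> RT" "par c = h + q1" using ch_iff by blast+
  hence "BB \<le> c" "(c - BB) mod 2 = 0" "c - BB < 2 * r1" using par_eq[of c "h + q1"] h1 q11 q22 by auto
  thus "c \<in> (\<lambda>k. BB + 2 * k) ` {..<r1}"
    by (intro image_eqI[of _ _ "(c - BB) div 2"]) auto
next
  fix c :: nat assume "c \<in> (\<lambda>k. BB + 2 * k) ` {..<r1}"
  then obtain k where k: "k < r1" "c = BB + 2 * k" by auto
  thus "c \<in> ch (h + q1)" unfolding ch_iff using par_eq[of c "h + q1"] h1 q11 q22 by auto
qed

lemma ch_b2first: "ch (h + q1 + 1) = {0}"
proof (intro Set.set_eqI iffI)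
  fix c :: nat assume "c \<in> ch (h + q1 + 1)"
  hence "c < NN" "c \<noteq> RT" "par c = h + q1 + 1" using ch_iff by blast+
  thus "c \<in> {0}" using par_eq[of c "h + q1 + 1"] h1 q11 q22 by auto
next
  fix c :: nat assume "c \<in> {0}"
  thus "c \<in> ch (h + q1 + 1)" unfolding ch_iff using par_eq[of c "h + q1 + 1"] h1 q11 q22 by auto
qed

lemma ch_b2: assumes "h + q1 + 1 < i" "i < RT" shows "ch i = {i - 1}"
proof (intro Set.set_eqI iffI)
  fix c :: nat assume "c \<in> ch i"
  hence "c < NN" "c \<noteq> RT" "par c = i" using ch_iff by blast+
  thus "c \<in> {i - 1}" using par_eq[of c i] assms h1 q11 q22 by auto
next
  fix c :: nat assume "c \<in> {i - 1}"
  thus "c \<in> ch i" unfolding ch_iff using par_eq[of c i] assms h1 q11 q22 by auto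
qed


lemma par_big: assumes "c < NN" "c \<noteq> RT" "BB \<le> par c"
  shows "BB \<le> c \<and> (c - BB) mod 2 = 1 \<and> par c = c - 1"
  using assms par_eq[OF assms(1,2), of "par c"] h1 q11 q22 by auto

lemma ch_p2a: assumes "BB \<le> i" "i < NN" "(i - BB) mod 2 = 0" shows "ch i = {i + 1}"
proof (intro Set.set_eqI iffI)
  fix c :: nat assume "c \<in> ch i"
  hence c: "c < NN" "c \<noteq> RT" "par c = i" using ch_iff by blast+
  hence "BB \<le> c" "par c = c - 1" using par_big[of c] assms(1) by auto
  thus "c \<in> {i + 1}" using c by simp
next
  fix c :: nat assume "c \<in> {i + 1}"
  hence c: "c = i + 1" by simp
  define e where "e = i - BB"
  have ie: "i = BB + e" using assms unfolding e_def by simp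
  have e2: "e mod 2 = 0" "e < 2 * (r1 + r2)" using assms unfolding e_def by auto
  hence "e + 1 < 2 * (r1 + r2)" by presburger
  hence "c < NN" using c ie by simp
  moreover have "Suc e mod 2 = 1" using e2 by presburger
  hence "par c = i" unfolding c ie par_def using e2 by simp
  ultimately show "c \<in> ch i" unfolding ch_iff using c assms(1) by simp
qed

lemma ch_p2b: assumes "BB \<le> i" "(i - BB) mod 2 = 1" shows "ch i = {}"
proof (intro Set.set_eqI iffI)
  fix c :: nat assume "c \<in> ch i"
  hence c: "c < NN" "c \<noteq> RT" "par c = i" using ch_iff by blast+
  hence b: "BB \<le> c" "(c - BB) mod 2 = 1" "par c = c - 1" using par_big[of c] assms(1) by auto
  define e where "e = c - BB"
  have "c = BB + e" "e mod 2 = 1" using b unfolding e_def by auto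
  hence "i - BB = e - 1" "1 \<le> e" using b c by auto
  hence "(i - BB) mod 2 = 0" using \<open>e mod 2 = 1\<close> by presburger
  thus "c \<in> {}" using assms by simp
qed simp

lemma ch_root: "ch RT = insert (RT - 1) ((\<lambda>k. BB + 2 * r1 + 2 * k) ` {..<r2})"
proof (intro Set.set_eqI iffI)
  fix c :: nat assume "c \<in> ch RT"
  hence c: "c < NN" "c \<noteq> RT" "par c = RT" using ch_iff by blast+
  show "c \<in> insert (RT - 1) ((\<lambda>k. BB + 2 * r1 + 2 * k) ` {..<r2})"
  proof (cases "c < RT")
    case True
    thus ?thesis using c par_eq[of c RT] h1 q11 q22 by auto
  next
    case False
    define e where "e = c - BB"
    have ce: "c = BB + e" using False c unfolding e_def by simp
    have "e mod 2 = 0" "\<not> e < 2 * r1"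
      using c par_eq[of c RT] h1 q11 q22 False unfolding e_def by auto
    moreover have "e < 2 * r1 + 2 * r2" using c ce by simp
    ultimately have "e = 2 * r1 + 2 * ((e - 2 * r1) div 2)" "(e - 2 * r1) div 2 < r2" by presburger+
    thus ?thesis using ce by (intro insertI2 image_eqI[of _ _ "(e - 2 * r1) div 2"]) auto
  qed
next
  fix c :: nat assume "c \<in> insert (RT - 1) ((\<lambda>k. BB + 2 * r1 + 2 * k) ` {..<r2})"
  thus "c \<in> ch RT"
  proof
    assume "c = RT - 1"
    thus ?thesis unfolding ch_iff using par_eq[of c RT] h1 q11 q22 by auto
  next
    assume "c \<in> (\<lambda>k. BB + 2 * r1 + 2 * k) ` {..<r2}"
    then obtain k where k: "k < r2" "c = BB + 2 * r1 + 2 * k" by auto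
    have "par c = RT" unfolding par_def k(2) by simp
    thus ?thesis unfolding ch_iff using k by simp
  qed
qed

end

fun it :: "real \<Rightarrow> real \<Rightarrow> nat \<Rightarrow> real" where
  "it l x 0 = x"
| "it l x (Suc k) = l - 1 / it l x k"

definition cA :: "real \<Rightarrow> nat \<Rightarrow> real" where "cA l k = it l l k"
definition cB :: "nat \<Rightarrow> real \<Rightarrow> nat \<Rightarrow> real" where "cB r1 l k = it l (l - real r1 / cA l 1) k"
definition cU :: "nat \<Rightarrow> nat \<Rightarrow> nat \<Rightarrow> real \<Rightarrow> real" where
  "cU r1 h q1 l = l - 1 / cA l (h - 1) - 1 / cB r1 l (q1 - 1)"
definition cE :: "nat \<Rightarrow> nat \<Rightarrow> nat \<Rightarrow> real \<Rightarrow> nat \<Rightarrow> real" where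
  "cE r1 h q1 l k = it l (cU r1 h q1 l) k"
definition cR :: "nat \<Rightarrow> nat \<Rightarrow> nat \<Rightarrow> nat \<Rightarrow> nat \<Rightarrow> real \<Rightarrow> real" where
  "cR r1 r2 h q1 q2 l = l - real r2 / cA l 1 - 1 / cE r1 h q1 l (q2 - 1)"

context ctree begin

definition DD :: "real \<Rightarrow> nat \<Rightarrow> real" where
  "DD l c = (if c = 0 then cU r1 h q1 l
   else if c \<le> h then cA l (h - c)
   else if c \<le> h + q1 then cB r1 l (h + q1 - c)
   else if c < RT then cE r1 h q1 l (c - h - q1)
   else if c = RT then cR r1 r2 h q1 q2 l
   else if (c - BB) mod 2 = 0 then cA l 1 else cA l 0)"

lemma DD_big: "BB \<le> c \<Longrightarrow> DD l c = (if (c - BB) mod 2 = 0 then cA l 1 else cA l 0)"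
  unfolding DD_def by auto

lemma Deq_DD: "Deq DD"
  unfolding Deq_def
proof (intro allI impI)
  fix l i assume iN: "i < NN"
  consider "i = 0" | "1 \<le> i" "i < h" | "i = h" | "h < i" "i < h + q1" | "i = h + q1"
    | "i = h + q1 + 1" | "h + q1 + 1 < i" "i < RT" | "i = RT" | "BB \<le> i" "(i - BB) mod 2 = 0"
    | "BB \<le> i" "(i - BB) mod 2 = 1"
  proof -
    have A: "i = 0 \<or> (1 \<le> i \<and> i < h) \<or> i = h \<or> (h < i \<and> i < h + q1) \<or> i = h + q1
      \<or> i = h + q1 + 1 \<or> (h + q1 + 1 < i \<and> i < RT) \<or> i = RT \<or> BB \<le> i"
      by linarith
    have B: "(i - BB) mod 2 = 0 \<or> (i - BB) mod 2 = 1" by auto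
    from A B show ?thesis by (elim disjE conjE) (rule that; assumption)+
  qed
  thus "DD l i = l - (\<Sum>c\<in>ch i. 1 / DD l c)"
  proof cases
    case 1
    have "DD l 1 = cA l (h - 1)" "DD l (h + 1) = cB r1 l (q1 - 1)"
      using h1 q11 unfolding DD_def by auto
    moreover have "(1::nat) \<noteq> h + 1" using h1 by simp
    moreover have "DD l 0 = cU r1 h q1 l" unfolding DD_def by simp
    ultimately show ?thesis unfolding 1 ch0 by (simp add: cU_def)
  next
    case 2
    have "DD l (i + 1) = cA l (h - i - 1)" using 2 unfolding DD_def by auto
    moreover have "DD l i = cA l (Suc (h - i - 1))" using 2 unfolding DD_def by (auto simp: Suc_diff_Suc)
    ultimately show ?thesis unfolding ch_pend[OF 2] by (simp add: cA_def)
  next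
    case 3
    have "DD l i = cA l 0" using 3 h1 unfolding DD_def by auto
    thus ?thesis unfolding 3 ch_h by (simp add: cA_def)
  next
    case 4
    have "DD l (i + 1) = cB r1 l (h + q1 - i - 1)" using 4 unfolding DD_def by auto
    moreover have "DD l i = cB r1 l (Suc (h + q1 - i - 1))" using 4 unfolding DD_def by (auto simp: Suc_diff_Suc)
    ultimately show ?thesis unfolding ch_b1[OF 4] by (simp add: cB_def)
  next
    case 5
    have "DD l i = l - real r1 / cA l 1" using 5 h1 q11 unfolding DD_def by (auto simp: cB_def)
    moreover have "(\<Sum>c\<in>ch i. 1 / DD l c) = real r1 / cA l 1"
    proof -
      have inj: "inj_on (\<lambda>k. BB + 2 * k) {..<r1}" by (auto simp: inj_on_def)
      have "(\<Sum>c\<in>ch i. 1 / DD l c) = (\<Sum>k<r1. 1 / DD l (BB + 2 * k))"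
        unfolding 5 ch_v1 by (rule sum.reindex_cong[OF inj refl]) simp
      also have "\<dots> = (\<Sum>k<r1. 1 / cA l 1)" by (intro sum.cong refl) (simp add: DD_big)
      finally show ?thesis by simp
    qed
    ultimately show ?thesis by simp
  next
    case 6
    have "DD l i = cE r1 h q1 l (Suc 0)" using 6 q22 unfolding DD_def by auto
    moreover have "DD l 0 = cE r1 h q1 l 0" unfolding DD_def cE_def by simp
    ultimately show ?thesis unfolding 6 ch_b2first by (simp add: cE_def)
  next
    case 7
    have "DD l (i - 1) = cE r1 h q1 l (i - 1 - h - q1)" using 7 unfolding DD_def by auto
    moreover have "DD l i = cE r1 h q1 l (Suc (i - 1 - h - q1))" using 7 unfolding DD_def
      by (auto simp: Suc_diff_Suc)
    ultimately show ?thesis unfolding ch_b2[OF 7] by (simp add: cE_def)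
  next
    case 8
    have inj: "inj_on (\<lambda>k. BB + 2 * r1 + 2 * k) {..<r2}" by (auto simp: inj_on_def)
    have nin: "RT - 1 \<notin> (\<lambda>k. BB + 2 * r1 + 2 * k) ` {..<r2}" by auto
    have "(\<Sum>c\<in>ch i. 1 / DD l c) = 1 / DD l (RT - 1) + (\<Sum>c\<in>(\<lambda>k. BB + 2 * r1 + 2 * k) ` {..<r2}. 1 / DD l c)"
      unfolding 8 ch_root by (rule sum.insert) (use nin in auto)
    also have "(\<Sum>c\<in>(\<lambda>k. BB + 2 * r1 + 2 * k) ` {..<r2}. 1 / DD l c) = (\<Sum>k<r2. 1 / DD l (BB + 2 * r1 + 2 * k))"
      by (rule sum.reindex_cong[OF inj refl]) simp
    also have "(\<Sum>k<r2. 1 / DD l (BB + 2 * r1 + 2 * k)) = (\<Sum>k<r2. 1 / cA l 1)"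
      by (intro sum.cong refl) (simp add: DD_big)
    also have "DD l (RT - 1) = cE r1 h q1 l (q2 - 1)" using q22 unfolding DD_def by auto
    finally have s: "(\<Sum>c\<in>ch i. 1 / DD l c) = 1 / cE r1 h q1 l (q2 - 1) + real r2 / cA l 1" by simp
    have "DD l i = cR r1 r2 h q1 q2 l" using 8 h1 q11 q22 unfolding DD_def by auto
    thus ?thesis using s by (simp add: cR_def)
  next
    case 9
    have "DD l i = cA l 1" using 9 by (simp add: DD_big)
    moreover have "DD l (i + 1) = cA l 0"
    proof -
      have "(i + 1 - BB) mod 2 = 1" using 9 by presburger
      thus ?thesis using 9 by (simp add: DD_big)
    qed
    ultimately show ?thesis unfolding ch_p2a[OF 9(1) iN 9(2)] by (simp add: cA_def)
  next
    case 10
    have "DD l i = cA l 0" using 10 by (simp add: DD_big)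
    thus ?thesis unfolding ch_p2b[OF 10] by (simp add: cA_def)
  qed
qed

end

context ctree begin

lemma par_pend: "1 \<le> c \<Longrightarrow> c \<le> h \<Longrightarrow> par c = c - 1" using h1 q11 q22 unfolding par_def by auto
lemma par_h1: "par (h + 1) = 0" using h1 q11 q22 unfolding par_def by auto
lemma par_b1: "h + 1 < c \<Longrightarrow> c \<le> h + q1 \<Longrightarrow> par c = c - 1" using h1 q11 q22 unfolding par_def by auto
lemma par_0: "par 0 = h + q1 + 1" using h1 q11 q22 unfolding par_def by auto
lemma par_b2: "h + q1 < c \<Longrightarrow> c < RT \<Longrightarrow> par c = c + 1" using h1 q11 q22 unfolding par_def by auto
lemma par_v1k: "k < r1 \<Longrightarrow> par (BB + 2 * k) = h + q1" using h1 q11 q22 unfolding par_def by auto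
lemma par_v2k: "k < r2 \<Longrightarrow> par (BB + 2 * r1 + 2 * k) = RT" using h1 q11 q22 unfolding par_def by auto
lemma par_odd: "par (BB + 2 * k + 1) = BB + 2 * k" using h1 q11 q22 unfolding par_def by auto

abbreviation "EE \<equiv> tree_edges r1 r2 (h, q1, q2)"

lemma EE_sub: assumes "(a, b) \<in> EE"
  shows "(b \<noteq> RT \<and> b < NN \<and> a = par b) \<or> (a \<noteq> RT \<and> a < NN \<and> b = par a)"
proof -
  have "(a, b) \<in> path_edges 0 1 h \<or> (a, b) \<in> path_edges 0 (h + 1) q1 \<or> (a, b) \<in> path_edges 0 (h + q1 + 1) q2
    \<or> (\<exists>k<r1. (a, b) \<in> path_edges (h + q1) (BB + 2 * k) 2)
    \<or> (\<exists>k<r2. (a, b) \<in> path_edges RT (BB + 2 * r1 + 2 * k) 2)"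
    using assms unfolding tree_edges_def Let_def by auto
  thus ?thesis
  proof (elim disjE exE conjE)
    assume "(a, b) \<in> path_edges 0 1 h"
    then consider "a = 0" "b = 1" | j where "a = 1 + j" "b = 1 + j + 1" "j + 1 < h"
      unfolding path_edges_def using h1 by (auto split: if_splits)
    thus ?thesis
    proof cases
      case 1 thus ?thesis using par_pend[of 1] h1 q11 q22 by auto
    next
      case 2
      have "1 \<le> b" "b \<le> h" using 2 by auto
      hence "par b = b - 1" by (rule par_pend)
      thus ?thesis using 2 q11 q22 by auto
    qed
  next
    assume "(a, b) \<in> path_edges 0 (h + 1) q1"
    then consider "a = 0" "b = h + 1" | j where "a = h + 1 + j" "b = h + 1 + j + 1" "j + 1 < q1"
      unfolding path_edges_def using q11 by (auto split: if_splits)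
    thus ?thesis
    proof cases
      case 1 thus ?thesis using par_h1 h1 q11 q22 by auto
    next
      case 2 thus ?thesis using par_b1[of b] h1 q11 q22 by auto
    qed
  next
    assume "(a, b) \<in> path_edges 0 (h + q1 + 1) q2"
    then consider "a = 0" "b = h + q1 + 1" | j where "a = h + q1 + 1 + j" "b = h + q1 + 1 + j + 1" "j + 1 < q2"
      unfolding path_edges_def using q22 by (auto split: if_splits)
    thus ?thesis
    proof cases
      case 1 thus ?thesis using par_0 h1 q11 q22 by auto
    next
      case 2 thus ?thesis using par_b2[of a] h1 q11 q22 by auto
    qed
  next
    fix k assume k: "k < r1" and "(a, b) \<in> path_edges (h + q1) (BB + 2 * k) 2"
    then consider "a = h + q1" "b = BB + 2 * k" | "a = BB + 2 * k" "b = BB + 2 * k + 1"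
      unfolding path_edges_def by auto
    thus ?thesis
    proof cases
      case 1 thus ?thesis using par_v1k[OF k] k h1 q11 q22 by auto
    next
      case 2 thus ?thesis using par_odd[of k] k h1 q11 q22 by auto
    qed
  next
    fix k assume k: "k < r2" and "(a, b) \<in> path_edges RT (BB + 2 * r1 + 2 * k) 2"
    then consider "a = RT" "b = BB + 2 * r1 + 2 * k" | "a = BB + 2 * r1 + 2 * k" "b = BB + 2 * r1 + 2 * k + 1"
      unfolding path_edges_def by auto
    thus ?thesis
    proof cases
      case 1 thus ?thesis using par_v2k[OF k] k h1 q11 q22 by auto
    next
      case 2 thus ?thesis using par_odd[of "r1 + k"] k by (auto simp: algebra_simps)
    qed
  qed
qed

lemma EE_sup: assumes c: "c < NN" "c \<noteq> RT"
  shows "(par c, c) \<in> EE \<or> (c, par c) \<in> EE"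
proof -
  consider "c = 0" | "1 \<le> c" "c \<le> h" | "c = h + 1" | "h + 1 < c" "c \<le> h + q1" | "h + q1 < c" "c < RT"
    | "BB \<le> c"
    using c by linarith
  thus ?thesis
  proof cases
    case 1
    have "(0, h + q1 + 1) \<in> path_edges 0 (h + q1 + 1) q2" unfolding path_edges_def using q22 by simp
    thus ?thesis using 1 par_0 unfolding tree_edges_def Let_def by auto
  next
    case 2
    have "(c - 1, c) \<in> path_edges 0 1 h"
    proof (cases "c = 1")
      case True thus ?thesis unfolding path_edges_def using h1 by simp
    next
      case False
      hence "(c - 1, c) = (1 + (c - 2), 1 + (c - 2) + 1)" "(c - 2) + 1 < h" using 2 by auto
      thus ?thesis unfolding path_edges_def by blast
    qed
    thus ?thesis using 2 par_pend unfolding tree_edges_def Let_def by auto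
  next
    case 3
    have "(0, h + 1) \<in> path_edges 0 (h + 1) q1" unfolding path_edges_def using q11 by simp
    thus ?thesis using 3 par_h1 unfolding tree_edges_def Let_def by auto
  next
    case 4
    have "(c - 1, c) = (h + 1 + (c - h - 2), h + 1 + (c - h - 2) + 1)" "(c - h - 2) + 1 < q1" using 4 by auto
    hence "(c - 1, c) \<in> path_edges 0 (h + 1) q1" unfolding path_edges_def by blast
    thus ?thesis using 4 par_b1 unfolding tree_edges_def Let_def by auto
  next
    case 5
    have "(c, c + 1) = (h + q1 + 1 + (c - h - q1 - 1), h + q1 + 1 + (c - h - q1 - 1) + 1)"
      "(c - h - q1 - 1) + 1 < q2" using 5 by auto
    hence "(c, c + 1) \<in> path_edges 0 (h + q1 + 1) q2" unfolding path_edges_def by blast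
    thus ?thesis using 5 par_b2 unfolding tree_edges_def Let_def by auto
  next
    case 6
    define e where "e = c - BB"
    have ce: "c = BB + e" using 6 unfolding e_def by simp
    have el: "e < 2 * r1 + 2 * r2" using c ce by simp
    consider "e mod 2 = 0" "e < 2 * r1" | "e mod 2 = 0" "\<not> e < 2 * r1" | "e mod 2 = 1" by linarith
    thus ?thesis
    proof cases
      case 1
      define k where "k = e div 2"
      have ek: "e = 2 * k" "k < r1" using 1 unfolding k_def by auto
      have "(h + q1, BB + 2 * k) \<in> path_edges (h + q1) (BB + 2 * k) 2" unfolding path_edges_def by simp
      hence "(h + q1, c) \<in> EE" using ek ce unfolding tree_edges_def Let_def by auto
      thus ?thesis using par_v1k[OF ek(2)] ce ek by auto
    next
      case 2
      define k where "k = (e - 2 * r1) div 2"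
      have ek: "e = 2 * r1 + 2 * k" "k < r2" using 2 el unfolding k_def by auto
      have "(RT, BB + 2 * r1 + 2 * k) \<in> path_edges RT (BB + 2 * r1 + 2 * k) 2" unfolding path_edges_def by simp
      hence "(RT, c) \<in> EE" using ek ce unfolding tree_edges_def Let_def by (auto simp: algebra_simps)
      thus ?thesis using par_v2k[OF ek(2)] ce ek by (auto simp: algebra_simps)
    next
      case 3
      define k where "k = e div 2"
      have ek: "e = 2 * k + 1" using 3 unfolding k_def by presburger
      show ?thesis
      proof (cases "k < r1")
        case True
        have "(BB + 2 * k, BB + 2 * k + 1) \<in> path_edges (h + q1) (BB + 2 * k) 2" unfolding path_edges_def by simp
        hence "(BB + 2 * k, c) \<in> EE" using ek ce True unfolding tree_edges_def Let_def by auto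
        thus ?thesis using par_odd[of k] ce ek by auto
      next
        case False
        define j where "j = k - r1"
        have kj: "k = r1 + j" "j < r2" using False el ek unfolding j_def by auto
        have "(BB + 2 * r1 + 2 * j, BB + 2 * r1 + 2 * j + 1) \<in> path_edges RT (BB + 2 * r1 + 2 * j) 2"
          unfolding path_edges_def by simp
        hence "(BB + 2 * k, c) \<in> EE" using ek ce kj unfolding tree_edges_def Let_def
          by (auto simp: algebra_simps)
        thus ?thesis using par_odd[of k] ce ek by auto
      qed
    qed
  qed
qed

lemma adj_iff: assumes "i < NN" "j < NN"
  shows "((i, j) \<in> EE \<or> (j, i) \<in> EE) \<longleftrightarrow> adj i j"
proof
  assume "(i, j) \<in> EE \<or> (j, i) \<in> EE"
  thus "adj i j" unfolding adj_def using EE_sub by blast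
next
  assume "adj i j"
  thus "(i, j) \<in> EE \<or> (j, i) \<in> EE" unfolding adj_def using EE_sup assms by blast
qed

lemma tree_adj_eq: "tree_adj r1 r2 (h, q1, q2) = M"
  unfolding tree_adj_def M_def tree_order_def
  by (rule eq_matI) (auto simp: adj_iff)

end

lemma it_Suc': "it l x (Suc k) = it l (it l x 1) k"
  by (induction k) auto

locale lam =
  fixes l :: real and r1 :: nat
  assumes l5: "5 \<le> l\<^sup>2" and lpos: "0 < l" and r1: "2 \<le> r1" and r1l: "real r1 + 3 \<le> l\<^sup>2"
begin

definition s where "s = (l - sqrt (l\<^sup>2 - 4)) / 2"
abbreviation "t \<equiv> l - s"

lemma sq: "sqrt (l\<^sup>2 - 4) ^ 2 = l\<^sup>2 - 4" using l5 by simp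

lemma sqrt_lt: "sqrt (l\<^sup>2 - 4) < l"
proof -
  have "sqrt (l\<^sup>2 - 4) < sqrt (l\<^sup>2)" by (rule real_sqrt_less_mono) simp
  thus ?thesis using lpos by simp
qed

lemma l_gt2: "2 < l"
proof -
  have "(2::real)^2 < l^2" using l5 by simp
  thus ?thesis using lpos by (smt (verit) power_mono)
qed

lemma s_pos: "0 < s" unfolding s_def using sqrt_lt by simp

lemma s_lt1: "s < 1"
proof -
  have "(l - 2)^2 < l\<^sup>2 - 4" using l_gt2 by (simp add: power2_eq_square algebra_simps)
  hence "l - 2 < sqrt (l\<^sup>2 - 4)" using l_gt2 by (simp add: real_less_rsqrt)
  thus ?thesis unfolding s_def by simp
qed

lemma st: "s * t = 1"
proof -
  have "s * t = (l - sqrt (l\<^sup>2 - 4)) * (l + sqrt (l\<^sup>2 - 4)) / 4" unfolding s_def by (simp add: field_simps)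
  also have "\<dots> = (l\<^sup>2 - sqrt (l\<^sup>2 - 4) ^ 2) / 4" by (simp add: power2_eq_square algebra_simps)
  also have "\<dots> = 1" using sq by simp
  finally show ?thesis .
qed

lemma t_pos: "0 < t" using s_pos s_lt1 l_gt2 by simp
lemma s_lt_t: "s < t" using s_lt1 l_gt2 by simp
lemma inv_s: "1 / s = t" using st s_pos by (simp add: field_simps)
lemma inv_t: "1 / t = s" using st t_pos by (simp add: field_simps)

lemma f_mono: "0 < x \<Longrightarrow> x < y \<Longrightarrow> l - 1 / x < l - 1 / y"
  by (simp add: frac_less2)

lemma it_gt_s: "s < x \<Longrightarrow> s < it l x k"
proof (induction k)
  case 0 thus ?case by simp
next
  case (Suc k)
  have "l - 1 / s < l - 1 / it l x k" using f_mono[OF s_pos Suc.IH[OF Suc.prems]] .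
  thus ?case using inv_s by simp
qed

lemma it_gt_t: "t < x \<Longrightarrow> t < it l x k"
proof (induction k)
  case 0 thus ?case by simp
next
  case (Suc k)
  have "l - 1 / t < l - 1 / it l x k" using f_mono[OF t_pos Suc.IH[OF Suc.prems]] .
  thus ?case using inv_t by simp
qed

lemma it_lt_t: "s < x \<Longrightarrow> x < t \<Longrightarrow> it l x k < t"
proof (induction k)
  case 0 thus ?case by simp
next
  case (Suc k)
  have "0 < it l x k" using it_gt_s[OF Suc.prems(1), of k] s_pos by simp
  hence "l - 1 / it l x k < l - 1 / t" using f_mono Suc.IH[OF Suc.prems] by blast
  thus ?case using inv_t by simp
qed

lemma it_mono: "s < x \<Longrightarrow> x < y \<Longrightarrow> it l x k < it l y k"
proof (induction k)
  case 0 thus ?case by simp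
next
  case (Suc k)
  have "0 < it l x k" using it_gt_s[OF Suc.prems(1), of k] s_pos by simp
  thus ?case using f_mono Suc.IH[OF Suc.prems] by simp
qed

lemma it_inc: assumes "s < x" "x < it l x 1" shows "it l x k < it l x (Suc k)"
  using it_mono[OF assms(1) assms(2), of k] unfolding it_Suc'[of l x k] .

lemma it_inc_le: assumes "s < x" "x < it l x 1" "k \<le> k'" shows "it l x k \<le> it l x k'"
  by (rule lift_Suc_mono_le[of "\<lambda>k. it l x k", OF _ assms(3)]) (use it_inc[OF assms(1,2)] in \<open>simp add: less_imp_le\<close>)

lemma it_dec: assumes "t < x" "it l x 1 < x" shows "it l x (Suc k) < it l x k"
proof -
  have "s < it l x 1" using it_gt_t[OF assms(1), of 1] s_lt_t by simp
  thus ?thesis using it_mono[OF _ assms(2), of k] unfolding it_Suc'[of l x k] by simp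
qed

lemma cA_gt_t: "t < cA l k"
  unfolding cA_def using it_gt_t s_pos by simp

lemma cA_pos: "0 < cA l k" using cA_gt_t t_pos by (meson less_trans)

lemma cA_dec: "cA l (Suc k) < cA l k"
proof -
  have "l - 1 / l < l" using lpos by simp
  thus ?thesis unfolding cA_def using it_dec[of l k] s_pos by simp
qed

lemma cA_inv_lt_s: "1 / cA l k < s"
proof -
  have "1 / cA l k < 1 / t" using cA_gt_t t_pos by (simp add: frac_less2)
  thus ?thesis using inv_t by simp
qed

lemma cA1: "cA l 1 = (l\<^sup>2 - 1) / l" unfolding cA_def using lpos by (simp add: field_simps power2_eq_square)

definition B0 where "B0 = l - real r1 / cA l 1"

lemma B0_eq: "B0 = l - real r1 * l / (l\<^sup>2 - 1)"
  unfolding B0_def cA1 by simp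

lemma l21: "4 \<le> l\<^sup>2 - 1" using l5 by simp

lemma B0_ge: "2 * l / (l\<^sup>2 - 1) \<le> B0"
proof -
  have "real r1 * l / (l\<^sup>2 - 1) \<le> (l\<^sup>2 - 3) * l / (l\<^sup>2 - 1)"
    using r1l lpos l21 by (intro divide_right_mono mult_right_mono) auto
  moreover have "l - (l\<^sup>2 - 3) * l / (l\<^sup>2 - 1) = 2 * l / (l\<^sup>2 - 1)"
    using l21 by (simp add: field_simps)
  ultimately show ?thesis unfolding B0_eq by linarith
qed

lemma key1: "s * (l\<^sup>2 - 1) < 2 * l"
proof -
  have sl: "s * l = s\<^sup>2 + 1" using st by (simp add: power2_eq_square algebra_simps)
  have "s * (l\<^sup>2 - 1) = l * s\<^sup>2 + l - s" using sl by (simp add: power2_eq_square algebra_simps)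
  moreover have "l * s\<^sup>2 < l" using s_pos s_lt1 lpos by (simp add: power_less_one_iff)
  ultimately show ?thesis using s_pos by linarith
qed

lemma B0_gt_s: "s < B0"
proof -
  have "s < 2 * l / (l\<^sup>2 - 1)" using key1 l21 by (simp add: field_simps)
  thus ?thesis using B0_ge by linarith
qed

lemma B0_lt_t: "B0 < t"
proof -
  have "s < 2 * l / (l\<^sup>2 - 1)" using key1 l21 by (simp add: field_simps)
  also have "\<dots> \<le> real r1 * l / (l\<^sup>2 - 1)" using r1 lpos l21 by (intro divide_right_mono mult_right_mono) auto
  finally show ?thesis unfolding B0_eq by simp
qed

lemma B0_pos: "0 < B0" using B0_gt_s s_pos by simp

lemma cB_it: "cB r1 l k = it l B0 k" unfolding cB_def B0_def by simp

lemma B_inc1: "B0 < it l B0 1"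
proof -
  have "B0 * B0 - l * B0 + 1 < 0"
  proof -
    have "B0 * B0 - l * B0 + 1 = (B0 - s) * (B0 - t)" using st by (simp add: algebra_simps)
    moreover have "(B0 - s) * (B0 - t) < 0" using B0_gt_s B0_lt_t by (simp add: mult_pos_neg)
    ultimately show ?thesis by simp
  qed
  hence "1 / B0 < l - B0" using B0_pos by (simp add: field_simps)
  thus ?thesis by simp
qed

lemma cB_gt_s: "s < cB r1 l k" unfolding cB_it using it_gt_s B0_gt_s by simp
lemma cB_pos: "0 < cB r1 l k" using cB_gt_s s_pos by (meson less_trans)
lemma cB_lt_t: "cB r1 l k < t" unfolding cB_it using it_lt_t B0_gt_s B0_lt_t by simp
lemma cB_inc: "cB r1 l k < cB r1 l (Suc k)" unfolding cB_it using it_inc B0_gt_s B_inc1 by simp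
lemma cB_inc_le: "k \<le> k' \<Longrightarrow> cB r1 l k \<le> cB r1 l k'" unfolding cB_it using it_inc_le B0_gt_s B_inc1 by simp

lemma cB_inv_gt_s: "s < 1 / cB r1 l k"
proof -
  have "1 / t < 1 / cB r1 l k" using cB_lt_t cB_pos by (simp add: frac_less2)
  thus ?thesis using inv_t by simp
qed

abbreviation "w \<equiv> 2 * l / (l\<^sup>2 + 1)"

lemma cB1_inv: "1 / cB r1 l 1 \<le> w"
proof -
  have "cB r1 l 1 = l - 1 / B0" unfolding cB_it by simp
  moreover have "1 / B0 \<le> (l\<^sup>2 - 1) / (2 * l)"
  proof -
    have p: "0 < 2 * l / (l\<^sup>2 - 1)" using lpos l21 by simp
    have "1 / B0 \<le> 1 / (2 * l / (l\<^sup>2 - 1))"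
      by (rule divide_left_mono[OF B0_ge _ mult_pos_pos[OF B0_pos p]]) simp
    thus ?thesis by simp
  qed
  moreover have "l - (l\<^sup>2 - 1) / (2 * l) = (l\<^sup>2 + 1) / (2 * l)" using lpos
    by (simp add: field_simps power2_eq_square)
  ultimately have ge: "(l\<^sup>2 + 1) / (2 * l) \<le> cB r1 l 1" by linarith
  have p: "0 < (l\<^sup>2 + 1) / (2 * l)" using lpos by (simp add: add_pos_nonneg)
  have q: "0 < cB r1 l 1 * ((l\<^sup>2 + 1) / (2 * l))" by (rule mult_pos_pos[OF cB_pos p])
  have "1 / cB r1 l 1 \<le> 1 / ((l\<^sup>2 + 1) / (2 * l))"
    by (rule divide_left_mono[OF ge _ q]) simp
  thus ?thesis by simp
qed

lemma cB_inv_le_w: "1 \<le> k \<Longrightarrow> 1 / cB r1 l k \<le> w"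
proof -
  assume "1 \<le> k"
  hence "cB r1 l 1 \<le> cB r1 l k" by (rule cB_inc_le)
  hence "1 / cB r1 l k \<le> 1 / cB r1 l 1" using cB_pos by (intro divide_left_mono) auto
  thus ?thesis using cB1_inv by linarith
qed

lemma w_le: "w \<le> sqrt (l\<^sup>2 - 4)"
proof -
  have "0 \<le> (l - 1)\<^sup>2" by simp
  hence "2 * l \<le> l\<^sup>2 + 1" unfolding power2_diff by simp
  moreover have "0 < l\<^sup>2 + 1" by (smt (verit) zero_le_power2[of l])
  ultimately have w1: "w \<le> 1" by (simp add: pos_divide_le_eq)
  have "1 \<le> sqrt (l\<^sup>2 - 4)" by (rule real_le_rsqrt) (use l5 in simp)
  thus ?thesis using w1 by linarith
qed

lemma two_s: "2 * s = l - sqrt (l\<^sup>2 - 4)" unfolding s_def by simp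

lemma key_U: "s + w \<le> t"
  using w_le two_s by linarith

lemma cU_gt_s: assumes "2 \<le> q1" shows "s < cU r1 h q1 l"
proof -
  have "1 / cA l (h - 1) < s" by (rule cA_inv_lt_s)
  moreover have "1 / cB r1 l (q1 - 1) \<le> w" using assms by (intro cB_inv_le_w) simp
  ultimately show ?thesis unfolding cU_def using key_U by linarith
qed

lemma cU_lt_l: "cU r1 h q1 l < l"
proof -
  have "0 < 1 / cA l (h - 1)" "0 < 1 / cB r1 l (q1 - 1)" using cA_pos cB_pos by simp_all
  thus ?thesis unfolding cU_def by linarith
qed

lemma cE_gt_s: "2 \<le> q1 \<Longrightarrow> s < cE r1 h q1 l k" unfolding cE_def using it_gt_s cU_gt_s by simp
lemma cE_pos: "2 \<le> q1 \<Longrightarrow> 0 < cE r1 h q1 l k" using cE_gt_s s_pos by (meson less_trans)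

lemma cE_lt_l: "2 \<le> q1 \<Longrightarrow> cE r1 h q1 l k < l"
proof (cases k)
  case 0 thus ?thesis using cU_lt_l unfolding cE_def by simp
next
  case (Suc j)
  assume q: "2 \<le> q1"
  have "0 < cE r1 h q1 l j" by (rule cE_pos[OF q])
  thus ?thesis unfolding Suc cE_def by simp
qed

end

context lam begin

lemma step_i: assumes "3 \<le> h" "2 \<le> q1" "2 \<le> q2"
  shows "cR r1 r2 h q1 q2 l < cR r1 r2 (h - 1) (q1 + 1) q2 l"
proof -
  have hh: "h - 1 = Suc (h - 2)" using assms(1) by simp
  have a: "cA l (h - 1) < cA l (h - 2)" unfolding hh by (rule cA_dec)
  hence a': "1 / cA l (h - 2) < 1 / cA l (h - 1)" using cA_pos by (simp add: frac_less2)
  have b: "cB r1 l (q1 - 1) < cB r1 l q1" using cB_inc[of "q1 - 1"] assms(2) by simp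
  hence b': "1 / cB r1 l q1 < 1 / cB r1 l (q1 - 1)" using cB_pos by (simp add: frac_less2)
  have U: "cU r1 h q1 l < cU r1 (h - 1) (q1 + 1) l"
    unfolding cU_def using a' b' by (simp add: numeral_2_eq_2 diff_diff_left)
  have "cE r1 h q1 l (q2 - 1) < cE r1 (h - 1) (q1 + 1) l (q2 - 1)"
    unfolding cE_def by (rule it_mono[OF cU_gt_s[OF assms(2)] U])
  hence "1 / cE r1 (h - 1) (q1 + 1) l (q2 - 1) < 1 / cE r1 h q1 l (q2 - 1)"
    using cE_pos[OF assms(2)] by (simp add: frac_less2)
  thus ?thesis unfolding cR_def by simp
qed

abbreviation "aa \<equiv> l / (l\<^sup>2 - 1)"

lemma g2: "s * (3 * l\<^sup>2 - 1) \<le> l * (l\<^sup>2 - 1)"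
proof -
  define L where "L = l\<^sup>2"
  have L5: "5 \<le> L" using l5 unfolding L_def .
  define z where "z = l * (L + 1) / (3 * L - 1)"
  have den: "0 < 3 * L - 1" using L5 by simp
  have zpos: "0 \<le> z" unfolding z_def using lpos den L5 by simp
  have poly: "L * (L + 1)\<^sup>2 \<le> (L - 4) * (3 * L - 1)\<^sup>2"
  proof -
    define d where "d = L - 5"
    have d: "0 \<le> d" "L = 5 + d" using L5 unfolding d_def by auto
    have "(L - 4) * (3 * L - 1)\<^sup>2 - L * (L + 1)\<^sup>2 = 16 + 184 * d + 76 * d\<^sup>2 + 8 * d ^ 3"
      unfolding d(2) by (simp add: power2_eq_square power3_eq_cube algebra_simps)
    also have "\<dots> \<ge> 0" using d(1) by simp
    finally show ?thesis by simp
  qed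
  have "z\<^sup>2 = L * (L + 1)\<^sup>2 / (3 * L - 1)\<^sup>2" unfolding z_def L_def by (simp add: power_divide power_mult_distrib)
  also have "\<dots> \<le> (L - 4)" using poly den by (simp add: divide_le_eq)
  finally have "z \<le> sqrt (l\<^sup>2 - 4)" unfolding L_def by (intro real_le_rsqrt)
  hence "2 * s \<le> l - z" using two_s by linarith
  moreover have "l - z = 2 * (l * (L - 1)) / (3 * L - 1)" unfolding z_def using den by (simp add: field_simps)
  ultimately have "s \<le> (l * (L - 1)) / (3 * L - 1)" by simp
  thus ?thesis using den unfolding L_def by (simp add: le_divide_eq mult.commute)
qed

lemma key_ii: "1 \<le> (t - w) * (aa + s)"
proof -
  have l1: "0 < l\<^sup>2 - 1" using l21 by simp
  have l2: "0 < l\<^sup>2 + 1" using l21 by simp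
  have gen: "\<And>S A W L :: real. (L - S - W) * (A + S) = S * (L - S) + (A * (L - W) - S * (A + W))"
    by (simp add: algebra_simps)
  have e1: "(t - w) * (aa + s) = 1 + (aa * (l - w) - s * (aa + w))"
    using gen[of l s w aa] st by simp
  have gen2: "x / (L - 1) * (x - 2 * x / (L + 1)) = x * x / (L + 1)" if "0 < L - 1" "0 < L + 1" for L x :: real
  proof -
    have "x - 2 * x / (L + 1) = x * (L - 1) / (L + 1)" using that by (simp add: field_simps)
    moreover have "x / (L - 1) * (x * (L - 1) / (L + 1)) = x * x / (L + 1)" using that by simp
    ultimately show ?thesis by simp
  qed
  have gen3: "\<And>L x :: real. 0 < L - 1 \<Longrightarrow> 0 < L + 1 \<Longrightarrow> x / (L - 1) + 2 * x / (L + 1) = x * (3 * L - 1) / ((L - 1) * (L + 1))"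
    by (simp add: field_simps)
  have e2: "aa * (l - w) = l\<^sup>2 / (l\<^sup>2 + 1)" using gen2[OF l1 l2, of l] by (simp add: power2_eq_square)
  have e3: "aa + w = l * (3 * l\<^sup>2 - 1) / ((l\<^sup>2 - 1) * (l\<^sup>2 + 1))" using gen3[OF l1 l2, of l] by simp
  have "s * (aa + w) \<le> aa * (l - w)"
  proof -
    have "s * (l * (3 * l\<^sup>2 - 1)) \<le> l * (l * (l\<^sup>2 - 1))"
      using g2 lpos by (simp add: mult_left_mono mult.left_commute)
    hence "s * (l * (3 * l\<^sup>2 - 1)) / ((l\<^sup>2 - 1) * (l\<^sup>2 + 1)) \<le> l * (l * (l\<^sup>2 - 1)) / ((l\<^sup>2 - 1) * (l\<^sup>2 + 1))"
      using l1 l2 by (intro divide_right_mono) auto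
    moreover have "l * (l * (l\<^sup>2 - 1)) / ((l\<^sup>2 - 1) * (l\<^sup>2 + 1)) = l\<^sup>2 / (l\<^sup>2 + 1)"
      using l1 by (simp add: power2_eq_square)
    ultimately show ?thesis unfolding e2 e3 by simp
  qed
  thus ?thesis unfolding e1 by simp
qed

lemma step_ii: assumes "3 \<le> m" "2 \<le> q"
  shows "cR r1 r2 2 m q l < cR r1 r2 (m - 1) 2 (q + 1) l"
proof -
  define U' where "U' = cU r1 (m - 1) 2 l"
  define U where "U = cU r1 2 m l"
  have U'eq: "U' = l - 1 / cA l (m - 2) - 1 / cB r1 l 1" unfolding U'_def cU_def by (simp add: numeral_2_eq_2)
  have Ueq: "U = l - 1 / cA l 1 - 1 / cB r1 l (m - 1)" unfolding U_def cU_def by simp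
  have V: "t - w < U'" using cA_inv_lt_s[of "m - 2"] cB1_inv unfolding U'eq by linarith
  have Vs: "s \<le> t - w" using key_U by linarith
  have Vpos: "0 < t - w" using Vs s_pos by linarith
  have i1: "1 / U' < 1 / (t - w)" using V Vpos by (simp add: frac_less2)
  have i2: "1 / (t - w) \<le> aa + s" using key_ii Vpos by (simp add: divide_le_eq mult.commute)
  have i3: "aa = 1 / cA l 1" unfolding cA1 by simp
  have i4: "s < 1 / cB r1 l (m - 1)" by (rule cB_inv_gt_s)
  have "U < l - 1 / U'" using i1 i2 i3 i4 unfolding Ueq by linarith
  hence "U < it l U' 1" by simp
  moreover have "s < U" unfolding U_def using cU_gt_s assms(1) by simp
  ultimately have "it l U (q - 1) < it l (it l U' 1) (q - 1)" using it_mono by blast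
  also have "it l (it l U' 1) (q - 1) = it l U' q" using it_Suc'[of l U' "q - 1"] assms(2) by simp
  finally have "cE r1 2 m l (q - 1) < cE r1 (m - 1) 2 l (q + 1 - 1)" unfolding cE_def U_def U'_def by simp
  hence "1 / cE r1 (m - 1) 2 l (q + 1 - 1) < 1 / cE r1 2 m l (q - 1)"
    using cE_pos[of m] cE_pos[of 2] assms by (simp add: frac_less2)
  thus ?thesis unfolding cR_def by simp
qed

end

lemma start_neg:
  assumes r: "3 \<le> r2" and q1: "2 \<le> q1" and q2: "2 \<le> q2" and lam: "lam l r1" and l2: "l\<^sup>2 = real r2 + 2"
  shows "cR r1 r2 h q1 q2 l < 0"
proof -
  interpret lam l r1 by (rule lam)
  have cA1': "cA l 1 = (real r2 + 1) / l" using cA1 l2 by simp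
  have E: "cE r1 h q1 l (q2 - 1) = l - 1 / cE r1 h q1 l (q2 - 2)"
  proof -
    have "q2 - 1 = Suc (q2 - 2)" using q2 by simp
    thus ?thesis unfolding cE_def by simp
  qed
  have "1 / l < 1 / cE r1 h q1 l (q2 - 2)" using cE_pos[OF q1] cE_lt_l[OF q1] by (simp add: frac_less2)
  moreover have "cA l 1 = l - 1 / l" by (simp add: cA_def)
  ultimately have "cE r1 h q1 l (q2 - 1) < cA l 1" unfolding E by linarith
  hence "1 / cA l 1 < 1 / cE r1 h q1 l (q2 - 1)" using cE_pos[OF q1] by (simp add: frac_less2)
  moreover have "l - real r2 / cA l 1 - 1 / cA l 1 = 0"
    unfolding cA1' using lpos by (simp add: field_simps)
  ultimately show ?thesis unfolding cR_def by (simp add: diff_divide_distrib) linarith?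
qed

context ctree begin

lemma DD_root: "DD l RT = cR r1 r2 h q1 q2 l"
  unfolding DD_def using h1 q11 q22 by auto

lemma DD_pos: assumes lam: "lam l r1" and q: "2 \<le> q1" and i: "i < NN" "i \<noteq> RT"
  shows "0 < DD l i"
proof -
  interpret L: lam l r1 by (rule lam)
  have "L.s < cU r1 h q1 l" by (rule L.cU_gt_s[OF q])
  hence "0 < cU r1 h q1 l" using L.s_pos by linarith
  moreover have "\<And>k. 0 < cA l k" by (rule L.cA_pos)
  moreover have "\<And>k. 0 < cB r1 l k" by (rule L.cB_pos)
  moreover have "\<And>k. 0 < cE r1 h q1 l k" by (rule L.cE_pos[OF q])
  ultimately show ?thesis unfolding DD_def using i by auto
qed

end

lemma rho_less:
  fixes r1 r2 h q1 q2 h' q1' q2' :: nat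
  assumes r: "2 \<le> r1" "r1 < r2" and T: "1 \<le> h" "2 \<le> q1" "2 \<le> q2" and T': "1 \<le> h'" "2 \<le> q1'" "2 \<le> q2'"
    and cmp: "\<And>l. lam l r1 \<Longrightarrow> cR r1 r2 h q1 q2 l < cR r1 r2 h' q1' q2' l"
  shows "rho r1 r2 (h', q1', q2') < rho r1 r2 (h, q1, q2)"
proof -
  interpret A: ctree r1 r2 h q1 q2 using T by unfold_locales auto
  interpret B: ctree r1 r2 h' q1' q2' using T' by unfold_locales auto
  define mu where "mu = sqrt (real r2 + 2)"
  have mu2: "mu\<^sup>2 = real r2 + 2" unfolding mu_def by simp
  have mupos: "0 < mu" unfolding mu_def by simp
  have lamI: "lam l r1" if l: "mu \<le> l" for l
  proof
    show "0 < l" using l mupos by simp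
    have "mu\<^sup>2 \<le> l\<^sup>2" using l mupos by (intro power_mono) auto
    hence L: "real r2 + 2 \<le> l\<^sup>2" using mu2 by simp
    thus "5 \<le> l\<^sup>2" using r by linarith
    show "2 \<le> r1" by (rule r(1))
    show "real r1 + 3 \<le> l\<^sup>2" using L r by linarith
  qed
  have "spectral_radius B.M < spectral_radius A.M"
  proof (rule compare[OF A.is_ptree B.is_ptree A.Deq_DD B.Deq_DD mupos])
    fix l i assume "mu \<le> l" "i < 1 + h + q1 + q2 + 2 * (r1 + r2)" "i \<noteq> h + q1 + q2"
    thus "0 < A.DD l i" using A.DD_pos[OF lamI T(2)] by blast
  next
    fix l i assume "mu \<le> l" "i < 1 + h' + q1' + q2' + 2 * (r1 + r2)" "i \<noteq> h' + q1' + q2'"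
    thus "0 < B.DD l i" using B.DD_pos[OF lamI T'(2)] by blast
  next
    fix l assume "mu \<le> l" "A.DD l (h + q1 + q2) = 0"
    thus "0 < B.DD l (h' + q1' + q2')" using cmp[OF lamI] A.DD_root B.DD_root by fastforce
  next
    have "cR r1 r2 h q1 q2 mu < 0"
      by (rule start_neg[OF _ T(2) T(3) lamI[OF order_refl] mu2]) (use r in linarith)
    thus "A.DD mu (h + q1 + q2) \<le> 0" using A.DD_root by simp
  qed
  thus ?thesis unfolding rho_def A.tree_adj_eq B.tree_adj_eq .
qed

lemma rho_step_i:
  assumes r: "2 \<le> r1" "r1 < r2" and "3 \<le> h" "2 \<le> q1" "2 \<le> q2"
  shows "rho r1 r2 (h - 1, q1 + 1, q2) < rho r1 r2 (h, q1, q2)"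
  by (rule rho_less[OF r]) (use assms lam.step_i in auto)

lemma rho_step_ii:
  assumes r: "2 \<le> r1" "r1 < r2" and "3 \<le> m" "2 \<le> q"
  shows "rho r1 r2 (m - 1, 2, q + 1) < rho r1 r2 (2, m, q)"
  by (rule rho_less[OF r]) (use assms lam.step_ii in auto)

lemma gamma_pow: "(gamma ^^ j) (a, b, c) = (a - j, b, c + j)"
  by (induction j) (auto simp: gamma_def)

lemma alpha_pow: "(alpha ^^ k) (a, b, c) = (a - k, b + k, c)"
  by (induction k) (auto simp: alpha_def)

definition row :: "nat \<Rightarrow> nat \<Rightarrow> (nat \<times> nat \<times> nat) list" where
  "row h0 j = map (\<lambda>k. (h0 - j - k, 2 + k, 2 + j)) [0..<h0 - 1 - j]"

lemma seqA_eq: "seqA h0 = concat (map (row h0) [0..<h0 - 1])"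
  unfolding seqA_def row_def by (simp add: alpha_pow gamma_pow algebra_simps)

lemma set_seqA: "set (seqA h0) = {(h0 - j - k, 2 + k, 2 + j) | j k. j < h0 - 1 \<and> k < h0 - 1 - j}"
  unfolding seqA_eq row_def by auto

lemma sorted_rows: "sorted_wrt inv_lex_succ (concat (map (row h0) [0..<m]))"
proof (induction m)
  case 0 thus ?case by simp
next
  case (Suc m)
  have r: "sorted_wrt inv_lex_succ (row h0 m)"
    unfolding row_def sorted_wrt_map
    by (rule sorted_wrt_mono_rel[OF _ sorted_wrt_upt[of 0 "h0 - 1 - m"]]) (auto simp: inv_lex_succ_def)
  have c: "\<forall>x\<in>set (concat (map (row h0) [0..<m])). \<forall>y\<in>set (row h0 m). inv_lex_succ x y"
    unfolding row_def by (auto simp: inv_lex_succ_def)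
  show ?case using Suc.IH r c by (simp add: sorted_wrt_append)
qed

lemma seqA_sorted: "sorted_wrt inv_lex_succ (seqA h0)"
  unfolding seqA_eq by (rule sorted_rows)

lemma inv_lex_irrefl: "\<not> inv_lex_succ t t"
  by (cases t) (auto simp: inv_lex_succ_def)

lemma seqA_distinct: "distinct (seqA h0)"
proof -
  have s: "\<And>i j. i < j \<Longrightarrow> j < length (seqA h0) \<Longrightarrow> inv_lex_succ (seqA h0 ! i) (seqA h0 ! j)"
    using seqA_sorted sorted_wrt_nth_less by blast
  show ?thesis unfolding distinct_conv_nth
  proof (intro allI impI)
    fix i j assume "i < length (seqA h0)" "j < length (seqA h0)" "i \<noteq> j"
    thus "seqA h0 ! i \<noteq> seqA h0 ! j"
      using s[of i j] s[of j i] inv_lex_irrefl by (cases "i < j") (metis, metis linorder_neqE_nat)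
  qed
qed

lemma seqA_last: assumes "2 \<le> h0" shows "last (seqA h0) = (2, 2, h0)"
proof -
  have u: "[0..<h0 - 1] = [0..<h0 - 2] @ [h0 - 2]" using assms
    by (metis Suc_diff_Suc Suc_1 diff_Suc_eq_diff_pred less_le_trans lessI upt_Suc_append zero_le)
  have "row h0 (h0 - 2) = [(2, 2, h0)]" unfolding row_def using assms by (simp add: upt_rec)
  thus ?thesis unfolding seqA_eq u by simp
qed

lemma fam_iff:
  assumes "int h0 = int n - 5 - 2 * (int r1 + int r2)"
  shows "(h, q1, q2) \<in> family r1 r2 n \<longleftrightarrow> 2 \<le> h \<and> 2 \<le> q1 \<and> 2 \<le> q2 \<and> h + q1 + q2 = h0 + 4"
  using assms unfolding family_def by auto

lemma row_mono:
  assumes r: "2 \<le> r1" "r1 < r2" and y: "2 \<le> y" "y < y'" and z: "2 \<le> z" and S: "y' + z + 2 \<le> S"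
  shows "rho r1 r2 (S - y' - z, y', z) < rho r1 r2 (S - y - z, y, z)"
  using y(2) S
proof (induction y' rule: less_induct)
  case (less y')
  show ?case
  proof (cases "y' = Suc y")
    case True
    have "rho r1 r2 (S - y - z - 1, y + 1, z) < rho r1 r2 (S - y - z, y, z)"
      by (rule rho_step_i[OF r]) (use less.prems y z True in auto)
    moreover have "S - y - z - 1 = S - y' - z" using True by simp
    ultimately show ?thesis using True by simp
  next
    case False
    define y0 where "y0 = y' - 1"
    have y0: "y < y0" "y0 < y'" "y' = y0 + 1" using False less.prems unfolding y0_def by auto
    have "y0 + z + 2 \<le> S" using y0 less.prems by linarith
    hence IH: "rho r1 r2 (S - y0 - z, y0, z) < rho r1 r2 (S - y - z, y, z)"
      using less.IH[OF y0(2) y0(1)] by simp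
    have "rho r1 r2 (S - y0 - z - 1, y0 + 1, z) < rho r1 r2 (S - y0 - z, y0, z)"
      by (rule rho_step_i[OF r]) (use less.prems y z y0 in auto)
    moreover have "S - y0 - z - 1 = S - y' - z" using y0 by simp
    ultimately show ?thesis using IH y0 by simp
  qed
qed

lemma row_le:
  assumes r: "2 \<le> r1" "r1 < r2" and y: "2 \<le> y" "y \<le> y'" and z: "2 \<le> z" and S: "y' + z + 2 \<le> S"
  shows "rho r1 r2 (S - y' - z, y', z) \<le> rho r1 r2 (S - y - z, y, z)"
proof (cases "y = y'")
  case True thus ?thesis by simp
next
  case False
  hence "y < y'" using y by simp
  from row_mono[OF r y(1) this z S] show ?thesis by simp
qed

lemma cross:
  assumes r: "2 \<le> r1" "r1 < r2" and z: "2 \<le> z" "z < z'" and S: "z' + 4 \<le> S"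
  shows "rho r1 r2 (S - 2 - z', 2, z') < rho r1 r2 (2, S - 2 - z, z)"
  using z(2) S
proof (induction z' rule: less_induct)
  case (less z')
  define q where "q = z' - 1"
  have q: "z' = q + 1" "z \<le> q" using less.prems unfolding q_def by auto
  have st: "rho r1 r2 (S - 2 - q - 1, 2, q + 1) < rho r1 r2 (2, S - 2 - q, q)"
    using rho_step_ii[OF r, of "S - 2 - q" q] less.prems q z by (simp add: numeral_2_eq_2)
  show ?case
  proof (cases "q = z")
    case True
    thus ?thesis using st q by (simp add: algebra_simps)
  next
    case False
    have IH: "rho r1 r2 (S - 2 - q, 2, q) < rho r1 r2 (2, S - 2 - z, z)"
      using less.IH[of q] q False less.prems by simp
    have "rho r1 r2 (S - (S - 2 - q) - q, S - 2 - q, q) \<le> rho r1 r2 (S - 2 - q, 2, q)"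
      using row_le[OF r order_refl, of "S - 2 - q" q S] q z less.prems by (simp add: algebra_simps)
    moreover have "S - (S - 2 - q) - q = 2" using less.prems q by simp
    ultimately show ?thesis using st IH q by (simp add: algebra_simps)
  qed
qed

theorem theorem5p3:
  fixes r1 r2 n h0 :: nat
  assumes "2 \<le> r1" and "r1 < r2"
    and "int h0 = int n - 5 - 2 * (int r1 + int r2)" and "2 \<le> h0"
  shows "(h0, 2, 2) \<in> family r1 r2 n \<and> (2, 2, h0) \<in> family r1 r2 n
    \<and> set (seqA h0) = family r1 r2 n \<and> distinct (seqA h0) \<and> last (seqA h0) = (2, 2, h0)
    \<and> (\<forall>i j. i < j \<and> j < length (seqA h0) \<longrightarrow> inv_lex_succ (seqA h0 ! i) (seqA h0 ! j))
    \<and> (\<forall>t\<in>family r1 r2 n. \<forall>t'\<in>family r1 r2 n.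
          inv_lex_succ t t' \<longrightarrow> rho r1 r2 t > rho r1 r2 t')
    \<and> rho r1 r2 (h0, 2, 2) = Max (rho r1 r2 ` family r1 r2 n)
    \<and> rho r1 r2 (2, 2, h0) = Min (rho r1 r2 ` family r1 r2 n)"
proof -
  note r = assms(1,2)
  note F = fam_iff[OF assms(3)]
  define S where "S = h0 + 4"
  have m1: "(h0, 2, 2) \<in> family r1 r2 n" using F assms(4) by simp
  have m2: "(2, 2, h0) \<in> family r1 r2 n" using F assms(4) by simp
  have set: "set (seqA h0) = family r1 r2 n"
  proof (intro Set.set_eqI iffI)
    fix x assume "x \<in> set (seqA h0)"
    then obtain j k where "x = (h0 - j - k, 2 + k, 2 + j)" "j < h0 - 1" "k < h0 - 1 - j"
      unfolding set_seqA by blast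
    thus "x \<in> family r1 r2 n" using F by auto
  next
    fix x assume x: "x \<in> family r1 r2 n"
    obtain h q1 q2 where hq: "x = (h, q1, q2)" by (cases x) auto
    have c: "2 \<le> h" "2 \<le> q1" "2 \<le> q2" "h + q1 + q2 = h0 + 4" using x F hq by auto
    show "x \<in> set (seqA h0)" unfolding set_seqA
      by (rule CollectI, rule exI[of _ "q2 - 2"], rule exI[of _ "q1 - 2"]) (use c hq in auto)
  qed
  have sorted: "\<forall>i j. i < j \<and> j < length (seqA h0) \<longrightarrow> inv_lex_succ (seqA h0 ! i) (seqA h0 ! j)"
    using seqA_sorted[of h0] sorted_wrt_nth_less by blast
  have mem: "x = S - y - z" "2 \<le> x" "2 \<le> y" "2 \<le> z" "y + z + 2 \<le> S" if "(x, y, z) \<in> family r1 r2 n" for x y z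
    using that F unfolding S_def by auto
  have cmp: "rho r1 r2 t' < rho r1 r2 t"
    if t: "t \<in> family r1 r2 n" and t': "t' \<in> family r1 r2 n" and lt: "inv_lex_succ t t'" for t t'
  proof -
    obtain x y z where tt: "t = (x, y, z)" by (cases t) auto
    obtain x' y' z' where tt': "t' = (x', y', z')" by (cases t') auto
    note a = mem[of x y z] t[unfolded tt]
    note b = mem[of x' y' z'] t'[unfolded tt']
    have "z < z' \<or> (z = z' \<and> y < y')" using lt unfolding tt tt' inv_lex_succ_def by auto
    thus ?thesis
    proof
      assume "z = z' \<and> y < y'"
      thus ?thesis using row_mono[OF r, of y y' z S] a b tt tt' by auto
    next
      assume zz: "z < z'"
      have "rho r1 r2 t' \<le> rho r1 r2 (S - 2 - z', 2, z')"
        using row_le[OF r order_refl, of y' z' S] a b tt' by (auto simp: algebra_simps)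
      also have "\<dots> < rho r1 r2 (2, S - 2 - z, z)"
        by (rule cross[OF r]) (use a b zz in auto)
      also have "\<dots> \<le> rho r1 r2 t"
      proof -
        have "rho r1 r2 (S - (S - 2 - z) - z, S - 2 - z, z) \<le> rho r1 r2 (S - y - z, y, z)"
          by (rule row_le[OF r]) (use a b in auto)
        moreover have "S - (S - 2 - z) - z = 2" using a b by auto
        ultimately show ?thesis using a b tt by auto
      qed
      finally show ?thesis .
    qed
  qed
  have fin: "finite (family r1 r2 n)"
  proof (rule finite_subset)
    show "family r1 r2 n \<subseteq> {..S} \<times> {..S} \<times> {..S}"
    proof
      fix t assume t: "t \<in> family r1 r2 n"
      obtain x y z where tt: "t = (x, y, z)" by (cases t) auto
      have "x = S - y - z" "y + z + 2 \<le> S" using mem[of x y z] t tt by auto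
      thus "t \<in> {..S} \<times> {..S} \<times> {..S}" using tt by auto
    qed
  qed auto
  have max: "rho r1 r2 (h0, 2, 2) = Max (rho r1 r2 ` family r1 r2 n)"
  proof (rule Max_eqI[symmetric])
    show "finite (rho r1 r2 ` family r1 r2 n)" using fin by simp
    show "rho r1 r2 (h0, 2, 2) \<in> rho r1 r2 ` family r1 r2 n" using m1 by simp
    fix v assume "v \<in> rho r1 r2 ` family r1 r2 n"
    then obtain t where t: "t \<in> family r1 r2 n" "v = rho r1 r2 t" by auto
    show "v \<le> rho r1 r2 (h0, 2, 2)"
    proof (cases "t = (h0, 2, 2)")
      case True thus ?thesis using t by simp
    next
      case False
      obtain x y z where tt: "t = (x, y, z)" by (cases t) auto
      have "inv_lex_succ (h0, 2, 2) t" using False t mem[of x y z] tt unfolding inv_lex_succ_def S_def by auto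
      thus ?thesis using cmp[OF m1 t(1)] t by simp
    qed
  qed
  have min: "rho r1 r2 (2, 2, h0) = Min (rho r1 r2 ` family r1 r2 n)"
  proof (rule Min_eqI[symmetric])
    show "finite (rho r1 r2 ` family r1 r2 n)" using fin by simp
    show "rho r1 r2 (2, 2, h0) \<in> rho r1 r2 ` family r1 r2 n" using m2 by simp
    fix v assume "v \<in> rho r1 r2 ` family r1 r2 n"
    then obtain t where t: "t \<in> family r1 r2 n" "v = rho r1 r2 t" by auto
    show "rho r1 r2 (2, 2, h0) \<le> v"
    proof (cases "t = (2, 2, h0)")
      case True thus ?thesis using t by simp
    next
      case False
      obtain x y z where tt: "t = (x, y, z)" by (cases t) auto
      have "inv_lex_succ t (2, 2, h0)" using False t mem[of x y z] tt unfolding inv_lex_succ_def S_def by auto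
      thus ?thesis using cmp[OF t(1) m2] t by simp
    qed
  qed
  show ?thesis using m1 m2 set seqA_distinct[of h0] seqA_last[OF assms(4)] sorted cmp max min by blast
qed

end
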